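(* Let $\mathcal{M}_X$ be a circular orientable embedding of a connected graph $X$. Let $Y$ be a connected voltage graph of $X$, and let $\mathcal{M}_Y$ be the associated voltage embedding. Let $\rho$ be the partition of the arcs of $Y$ whose classes are the preimages of the arcs of $X$, and let $\widehat L$ be its normalized characteristic matrix. If $U_X$ and $U_Y$ are the vertex-face transition matrices of $\mathcal{M}_X$ and $\mathcal{M}_Y$, then \[U_X=\widehat L^TU_Y\widehat L.\] Consequently, the $H$-digraph of $\mathcal{M}_X$ is a quotient digraph of the $H$-digraph of $\mathcal{M}_Y$.
   Context: Setting. A circular embedding is a cellular embedding in which every face is bounded by a cycle. Arcs are ordered pairs $(u,v)$ with $\{u,v\}$ an edge, and $u$ is the tail. Vertex-face transition matrix. Fix a consistent orientation of the faces, so that each edge shared by two faces receives opposite directions in them; then every arc lies in exactly one facial walk. Let $M$ be the arc-face incidence matrix and $N$ the arc-tail incidence matrix ($N_{(a,b),u}=1$ iff $a=u$). Let $\widehat M,\widehat N$ be these matrices with columns scaled to unit length. The transition matrix is $U=(2\widehat M\widehat M^T-I)(2\widehat N\widehat N^T-I)$. Voltage graph. Let $\Gamma$ be a group of order $r$ and $\phi$ a map from the arcs of $X$ to $\Gamma$ with $\phi(v,u)=\phi(u,v)^{-1}$. The voltage graph $Y=X^\phi$ has vertex set $V(X)\times\Gamma$, with $(u,g)$ adjacent to $(v,g\phi(u,v))$ for each arc $(u,v)$ of $X$. The covering map $\psi(u,g)=u$ is a homomorphism that is a bijection on neighbourhoods. Voltage embedding. The voltage embedding $\mathcal{M}_Y$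 is the orientable embedding of $Y$ whose facial walks are the closed walks into which the preimages under $\psi$ of the (oriented) facial walks of $\mathcal{M}_X$ decompose. Normalized characteristic matrix. The characteristic matrix of a partition has a column for each class, equal to the indicator vector of that class; normalizing scales each column to unit length. $H$-digraph. The principal Hamiltonian of a unitary $V$ with spectral decomposition $\sum\alpha_rF_r$ is $-i\sum\log(\alpha_r)F_r$, with $-\pi<-i\log\alpha_r\le\pi$. The $H$-digraph of an embedding is the weighted digraph on the arcs whose weighted adjacency matrix is the principal Hamiltonian of $U^2$. Quotient digraph. The quotient digraph of a weighted digraph with weighted adjacency matrix $H$, with respect to a partition with normalized characteristic matrix $\widehat L$, is the weighted digraph on the classes with weighted adjacency matrix $\widehat L^TH\widehat L$. *)

theory Defs
  imports "HOL-Analysis.Analysis" "HOL-Algebra.Group"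
begin

text \<open>A matrix with rows indexed by I and columns by J is a function
 'i => 'j => complex; products are restricted to the given index sets
 (entries outside the index sets are 0).\<close>

definition mmult :: "'i set \<Rightarrow> 'k set \<Rightarrow> 'j set \<Rightarrow> ('i \<Rightarrow> 'k \<Rightarrow> complex)
    \<Rightarrow> ('k \<Rightarrow> 'j \<Rightarrow> complex) \<Rightarrow> 'i \<Rightarrow> 'j \<Rightarrow> complex" where
  "mmult I K J A B = (\<lambda>i j. if i \<in> I \<and> j \<in> J then (\<Sum>k\<in>K. A i k * B k j) else 0)"

definition mtrans :: "('i \<Rightarrow> 'j \<Rightarrow> complex) \<Rightarrow> 'j \<Rightarrow> 'i \<Rightarrow> complex" where
  "mtrans A = (\<lambda>j i. A i j)"

definition idm :: "'i set \<Rightarrow> 'i \<Rightarrow> 'i \<Rightarrow> complex" where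
  "idm I = (\<lambda>i j. if i \<in> I \<and> j \<in> I \<and> i = j then 1 else 0)"

definition mat_eq_on :: "'i set \<Rightarrow> 'j set \<Rightarrow> ('i \<Rightarrow> 'j \<Rightarrow> complex) \<Rightarrow> ('i \<Rightarrow> 'j \<Rightarrow> complex) \<Rightarrow> bool" where
  "mat_eq_on I J A B \<longleftrightarrow> (\<forall>i\<in>I. \<forall>j\<in>J. A i j = B i j)"

definition simple_graph :: "'v set \<Rightarrow> ('v \<Rightarrow> 'v \<Rightarrow> bool) \<Rightarrow> bool" where
  "simple_graph V E \<longleftrightarrow> finite V \<and>
     (\<forall>u v. E u v \<longrightarrow> u \<in> V \<and> v \<in> V \<and> E v u \<and> u \<noteq> v)"

definition connected_graph :: "'v set \<Rightarrow> ('v \<Rightarrow> 'v \<Rightarrow> bool) \<Rightarrow> bool" where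
  "connected_graph V E \<longleftrightarrow>
     (\<forall>u\<in>V. \<forall>v\<in>V. (u, v) \<in> {(x, y). x \<in> V \<and> y \<in> V \<and> E x y}\<^sup>*)"

text \<open>Arcs: ordered pairs (u,v) with {u,v} an edge; the tail is fst.\<close>
definition arcs :: "'v set \<Rightarrow> ('v \<Rightarrow> 'v \<Rightarrow> bool) \<Rightarrow> ('v \<times> 'v) set" where
  "arcs V E = {(u, v). u \<in> V \<and> v \<in> V \<and> E u v}"

text \<open>An oriented (orientable) cellular embedding is encoded by the permutation
 sigma of the arcs sending each arc to the next arc of the (consistently oriented)
 facial walk containing it. The rotation at v (u |-> head of sigma(u,v)) must be
 a cyclic permutation of the neighbourhood of v (rotation system).\<close>
definition orientable_embedding ::
  "'v set \<Rightarrow> ('v \<Rightarrow> 'v \<Rightarrow> bool) \<Rightarrow> ('v \<times> 'v \<Rightarrow> 'v \<times> 'v) \<Rightarrow> bool" where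
  "orientable_embedding V E \<sigma> \<longleftrightarrow>
     bij_betw \<sigma> (arcs V E) (arcs V E) \<and>
     (\<forall>a\<in>arcs V E. fst (\<sigma> a) = snd a) \<and>
     (\<forall>v\<in>V. \<forall>u w. E v u \<and> E v w \<longrightarrow>
        (\<exists>n. ((\<lambda>x. snd (\<sigma> (x, v))) ^^ n) u = w))"

definition facial_orbit :: "('a \<Rightarrow> 'a) \<Rightarrow> 'a \<Rightarrow> 'a set" where
  "facial_orbit \<sigma> a = {(\<sigma> ^^ n) a | n. True}"

definition faces :: "'v set \<Rightarrow> ('v \<Rightarrow> 'v \<Rightarrow> bool) \<Rightarrow> ('v \<times> 'v \<Rightarrow> 'v \<times> 'v) \<Rightarrow> ('v \<times> 'v) set set" where
  "faces V E \<sigma> = facial_orbit \<sigma> ` arcs V E"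

text \<open>Circular: every facial walk is a cycle (length >= 3, no repeated vertex).\<close>
definition circular_embedding ::
  "'v set \<Rightarrow> ('v \<Rightarrow> 'v \<Rightarrow> bool) \<Rightarrow> ('v \<times> 'v \<Rightarrow> 'v \<times> 'v) \<Rightarrow> bool" where
  "circular_embedding V E \<sigma> \<longleftrightarrow> orientable_embedding V E \<sigma> \<and>
     (\<forall>F\<in>faces V E \<sigma>. 3 \<le> card F \<and> inj_on fst F)"

definition Mhat :: "'v set \<Rightarrow> ('v \<Rightarrow> 'v \<Rightarrow> bool) \<Rightarrow> ('v \<times> 'v \<Rightarrow> 'v \<times> 'v)
    \<Rightarrow> 'v \<times> 'v \<Rightarrow> ('v \<times> 'v) set \<Rightarrow> complex" where
  "Mhat V E \<sigma> = (\<lambda>a F. if a \<in> arcs V E \<and> F \<in> faces V E \<sigma> \<and> a \<in> F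
        then complex_of_real (1 / sqrt (real (card {b \<in> arcs V E. b \<in> F}))) else 0)"

definition Nhat :: "'v set \<Rightarrow> ('v \<Rightarrow> 'v \<Rightarrow> bool) \<Rightarrow> 'v \<times> 'v \<Rightarrow> 'v \<Rightarrow> complex" where
  "Nhat V E = (\<lambda>a u. if a \<in> arcs V E \<and> u \<in> V \<and> fst a = u
        then complex_of_real (1 / sqrt (real (card {b \<in> arcs V E. fst b = u}))) else 0)"

definition transition_matrix :: "'v set \<Rightarrow> ('v \<Rightarrow> 'v \<Rightarrow> bool) \<Rightarrow> ('v \<times> 'v \<Rightarrow> 'v \<times> 'v)
    \<Rightarrow> 'v \<times> 'v \<Rightarrow> 'v \<times> 'v \<Rightarrow> complex" where
  "transition_matrix V E \<sigma> =
     (let A = arcs V E; Fs = faces V E \<sigma>;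
          P = mmult A Fs A (Mhat V E \<sigma>) (mtrans (Mhat V E \<sigma>));
          Q = mmult A V A (Nhat V E) (mtrans (Nhat V E))
      in mmult A A A (\<lambda>i j. 2 * P i j - idm A i j) (\<lambda>i j. 2 * Q i j - idm A i j))"

definition spectral_decomposition :: "'i set \<Rightarrow> ('i \<Rightarrow> 'i \<Rightarrow> complex) \<Rightarrow> complex set
    \<Rightarrow> (complex \<Rightarrow> 'i \<Rightarrow> 'i \<Rightarrow> complex) \<Rightarrow> bool" where
  "spectral_decomposition I W S F \<longleftrightarrow> finite S \<and>
     (\<forall>\<alpha>\<in>S. (\<exists>i\<in>I. \<exists>j\<in>I. F \<alpha> i j \<noteq> 0) \<and>
             (\<forall>i\<in>I. \<forall>j\<in>I. F \<alpha> i j = cnj (F \<alpha> j i)) \<and>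
             mat_eq_on I I (mmult I I I (F \<alpha>) (F \<alpha>)) (F \<alpha>)) \<and>
     (\<forall>\<alpha>\<in>S. \<forall>\<beta>\<in>S. \<alpha> \<noteq> \<beta> \<longrightarrow> mat_eq_on I I (mmult I I I (F \<alpha>) (F \<beta>)) (\<lambda>_ _. 0)) \<and>
     mat_eq_on I I (\<lambda>i j. \<Sum>\<alpha>\<in>S. F \<alpha> i j) (idm I) \<and>
     mat_eq_on I I W (\<lambda>i j. \<Sum>\<alpha>\<in>S. \<alpha> * F \<alpha> i j)"

text \<open>Principal Hamiltonian: -i * sum log(alpha) F alpha with the principal branch
 (Ln has imaginary part in (-pi, pi], so -pi < -i log alpha <= pi for |alpha| = 1).\<close>
definition principal_hamiltonian :: "'i set \<Rightarrow> ('i \<Rightarrow> 'i \<Rightarrow> complex) \<Rightarrow> 'i \<Rightarrow> 'i \<Rightarrow> complex" where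
  "principal_hamiltonian I W = (THE H. \<exists>S F. spectral_decomposition I W S F \<and>
      H = (\<lambda>i j. if i \<in> I \<and> j \<in> I then (\<Sum>\<alpha>\<in>S. (- \<i> * Ln \<alpha>) * F \<alpha> i j) else 0))"

definition H_digraph :: "'v set \<Rightarrow> ('v \<Rightarrow> 'v \<Rightarrow> bool) \<Rightarrow> ('v \<times> 'v \<Rightarrow> 'v \<times> 'v)
    \<Rightarrow> 'v \<times> 'v \<Rightarrow> 'v \<times> 'v \<Rightarrow> complex" where
  "H_digraph V E \<sigma> = (let A = arcs V E; U = transition_matrix V E \<sigma>
      in principal_hamiltonian A (mmult A A A U U))"

definition norm_char_matrix :: "'a set \<Rightarrow> 'c set \<Rightarrow> ('c \<Rightarrow> 'a set) \<Rightarrow> 'a \<Rightarrow> 'c \<Rightarrow> complex" where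
  "norm_char_matrix A C cls = (\<lambda>a c. if a \<in> A \<and> c \<in> C \<and> a \<in> cls c
       then complex_of_real (1 / sqrt (real (card (cls c)))) else 0)"

definition quotient_digraph :: "'a set \<Rightarrow> 'c set \<Rightarrow> ('a \<Rightarrow> 'a \<Rightarrow> complex)
    \<Rightarrow> ('a \<Rightarrow> 'c \<Rightarrow> complex) \<Rightarrow> 'c \<Rightarrow> 'c \<Rightarrow> complex" where
  "quotient_digraph A C H L = mmult C A C (mtrans L) (mmult A A C H L)"

definition voltage_assignment :: "('g, 'b) monoid_scheme \<Rightarrow> 'v set \<Rightarrow> ('v \<Rightarrow> 'v \<Rightarrow> bool)
    \<Rightarrow> ('v \<times> 'v \<Rightarrow> 'g) \<Rightarrow> bool" where
  "voltage_assignment G V E \<phi> \<longleftrightarrow>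
     (\<forall>a\<in>arcs V E. \<phi> a \<in> carrier G \<and> \<phi> (snd a, fst a) = inv\<^bsub>G\<^esub> (\<phi> a))"

definition voltage_vertices :: "('g, 'b) monoid_scheme \<Rightarrow> 'v set \<Rightarrow> ('v \<times> 'g) set" where
  "voltage_vertices G V = V \<times> carrier G"

definition voltage_edges :: "('g, 'b) monoid_scheme \<Rightarrow> ('v \<Rightarrow> 'v \<Rightarrow> bool) \<Rightarrow> ('v \<times> 'v \<Rightarrow> 'g)
    \<Rightarrow> 'v \<times> 'g \<Rightarrow> 'v \<times> 'g \<Rightarrow> bool" where
  "voltage_edges G E \<phi> = (\<lambda>(u, g) (v, h). E u v \<and> g \<in> carrier G \<and> h = g \<otimes>\<^bsub>G\<^esub> \<phi> (u, v))"

definition cover_arc :: "('v \<times> 'g) \<times> ('v \<times> 'g) \<Rightarrow> 'v \<times> 'v" where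
  "cover_arc b = (fst (fst b), fst (snd b))"

text \<open>The arc
 ((u,g),(v,h)) lies over (u,v); the next arc of the facial walk of X is
 (v,w) = sigma(u,v), whose unique lift starting at (v,h) is ((v,h),(w, h * phi(v,w))).
 Orbits of this map are exactly the closed walks into which the preimages of the
 facial walks of X decompose.\<close>
definition voltage_embedding :: "('g, 'b) monoid_scheme \<Rightarrow> ('v \<times> 'v \<Rightarrow> 'g) \<Rightarrow> ('v \<times> 'v \<Rightarrow> 'v \<times> 'v)
    \<Rightarrow> ('v \<times> 'g) \<times> ('v \<times> 'g) \<Rightarrow> ('v \<times> 'g) \<times> ('v \<times> 'g)" where
  "voltage_embedding G \<phi> \<sigma> = (\<lambda>((u, g), (v, h)).
     let w = snd (\<sigma> (u, v)) in ((v, h), (w, h \<otimes>\<^bsub>G\<^esub> \<phi> (v, w))))"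

end

theory Submission
  imports Defs "HOL-Computational_Algebra.Fundamental_Theorem_Algebra"
begin

lemma mmult_in: "i \<in> I \<Longrightarrow> j \<in> J \<Longrightarrow> mmult I K J A B i j = (\<Sum>k\<in>K. A i k * B k j)"
  by (simp add: mmult_def)

lemma mmult_out: "i \<notin> I \<or> j \<notin> J \<Longrightarrow> mmult I K J A B i j = 0"
  by (auto simp: mmult_def)

lemma mmult_assoc:
  "mmult I K J (mmult I L K A B) C = mmult I L J A (mmult L K J B C)"
proof (intro ext)
  fix i j
  show "mmult I K J (mmult I L K A B) C i j = mmult I L J A (mmult L K J B C) i j"
  proof (cases "i \<in> I \<and> j \<in> J")
    case True
    have "(\<Sum>k\<in>K. mmult I L K A B i k * C k j) = (\<Sum>k\<in>K. (\<Sum>l\<in>L. A i l * B l k) * C k j)"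
      by (rule sum.cong) (use True in \<open>auto simp: mmult_def\<close>)
    also have "\<dots> = (\<Sum>l\<in>L. A i l * (\<Sum>k\<in>K. B l k * C k j))"
      by (simp add: sum_distrib_left sum_distrib_right mult.assoc sum.swap[of _ K L])
    also have "\<dots> = (\<Sum>l\<in>L. A i l * mmult L K J B C l j)"
      by (rule sum.cong) (use True in \<open>auto simp: mmult_def\<close>)
    finally show ?thesis using True by (simp add: mmult_def)
  qed (auto simp: mmult_def)
qed

lemma mmult_cong:
  assumes "mat_eq_on I K A A'" "mat_eq_on K J B B'"
  shows "mmult I K J A B = mmult I K J A' B'"
  using assms by (auto simp: mmult_def mat_eq_on_def intro!: ext sum.cong)

lemma mmult_idm_left: "j \<in> J \<Longrightarrow> i \<in> I \<Longrightarrow> finite I \<Longrightarrow> mmult I I J (idm I) B i j = B i j"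
  by (simp add: mmult_def idm_def if_distrib[of "\<lambda>x. x * _"] sum.delta cong: if_cong)

lemma mmult_idm_right: "j \<in> J \<Longrightarrow> i \<in> I \<Longrightarrow> finite J \<Longrightarrow> mmult I J J A (idm J) i j = A i j"
  by (simp add: mmult_def idm_def if_distrib[of "\<lambda>x. _ * x"] sum.delta' cong: if_cong)

definition ap :: "'i set \<Rightarrow> 'j set \<Rightarrow> ('i \<Rightarrow> 'j \<Rightarrow> complex) \<Rightarrow> ('j \<Rightarrow> complex) \<Rightarrow> 'i \<Rightarrow> complex" where
  "ap I J M v = (\<lambda>i. if i \<in> I then \<Sum>j\<in>J. M i j * v j else 0)"

definition supp :: "'i set \<Rightarrow> ('i \<Rightarrow> complex) \<Rightarrow> bool" where
  "supp I v \<longleftrightarrow> (\<forall>i. i \<notin> I \<longrightarrow> v i = 0)"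

definition ev :: "'i \<Rightarrow> 'i \<Rightarrow> complex" where
  "ev j = (\<lambda>k. if k = j then 1 else 0)"

lemma supp_ap[simp]: "supp I (ap I J M v)"
  by (simp add: supp_def ap_def)

lemma ap_add: "ap I J M (\<lambda>j. x j + y j) = (\<lambda>i. ap I J M x i + ap I J M y i)"
  by (auto simp: ap_def distrib_left sum.distrib)

lemma ap_scale: "ap I J M (\<lambda>j. c * x j) = (\<lambda>i. c * ap I J M x i)"
  by (auto simp: ap_def sum_distrib_left ac_simps)

lemma ap_sum: "ap I J M (\<lambda>j. \<Sum>k\<in>K. f k j) = (\<lambda>i. \<Sum>k\<in>K. ap I J M (f k) i)"
  by (auto simp: ap_def sum_distrib_left sum.swap[of _ J K])

lemma ap_lc: "ap I J M (\<lambda>j. \<Sum>k\<in>K. c k * f k j) = (\<lambda>i. \<Sum>k\<in>K. c k * ap I J M (f k) i)"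
  by (simp add: ap_sum ap_scale)

lemma ap_zero[simp]: "ap I J M (\<lambda>j. 0) = (\<lambda>i. 0)"
  by (auto simp: ap_def)

lemma ap_mmult: "ap I J (mmult I K J A B) v = ap I K A (ap K J B v)"
proof (intro ext)
  fix i
  show "ap I J (mmult I K J A B) v i = ap I K A (ap K J B v) i"
  proof (cases "i \<in> I")
    case True
    have "(\<Sum>j\<in>J. mmult I K J A B i j * v j) = (\<Sum>j\<in>J. (\<Sum>k\<in>K. A i k * B k j) * v j)"
      by (rule sum.cong) (use True in \<open>auto simp: mmult_def\<close>)
    also have "\<dots> = (\<Sum>k\<in>K. A i k * (\<Sum>j\<in>J. B k j * v j))"
      by (simp add: sum_distrib_left sum_distrib_right mult.assoc sum.swap[of _ K J])
    also have "\<dots> = (\<Sum>k\<in>K. A i k * ap K J B v k)"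
      by (rule sum.cong) (auto simp: ap_def)
    finally show ?thesis using True by (simp add: ap_def)
  qed (simp add: ap_def)
qed

lemma ap_ev: "finite J \<Longrightarrow> j \<in> J \<Longrightarrow> ap I J M (ev j) i = (if i \<in> I then M i j else 0)"
  by (simp add: ap_def ev_def if_distrib[of "\<lambda>x. _ * x"] sum.delta' cong: if_cong)

lemma vec_decomp: "finite I \<Longrightarrow> supp I v \<Longrightarrow> v = (\<lambda>i. \<Sum>j\<in>I. v j * ev j i)"
  by (auto simp: supp_def ev_def if_distrib[of "\<lambda>x. _ * x"] sum.delta' cong: if_cong intro!: ext)

lemma ap_cong: "mat_eq_on I J M M' \<Longrightarrow> ap I J M v = ap I J M' v"
  by (auto simp: ap_def mat_eq_on_def intro!: ext sum.cong)

lemma ap_cong_v: "(\<And>j. j \<in> J \<Longrightarrow> v j = v' j) \<Longrightarrow> ap I J M v = ap I J M v'"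
  by (auto simp: ap_def intro!: ext sum.cong)

lemma ap_idm: "finite I \<Longrightarrow> supp I v \<Longrightarrow> ap I I (idm I) v = v"
  by (auto simp: ap_def idm_def supp_def if_distrib[of "\<lambda>x. x * _"] sum.delta cong: if_cong intro!: ext)

lemma mat_from_ap: "finite J \<Longrightarrow> i \<in> I \<Longrightarrow> j \<in> J \<Longrightarrow> M i j = ap I J M (ev j) i"
  by (simp add: ap_ev)

section \<open>Polynomial action\<close>

definition pact :: "'i set \<Rightarrow> ('i \<Rightarrow> 'i \<Rightarrow> complex) \<Rightarrow> complex poly \<Rightarrow> ('i \<Rightarrow> complex) \<Rightarrow> 'i \<Rightarrow> complex" where
  "pact I W p v = (\<lambda>i. \<Sum>k\<le>degree p. coeff p k * ((ap I I W ^^ k) v) i)"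

lemma powT_lc: "(ap I I W ^^ n) (\<lambda>j. \<Sum>k\<in>K. c k * f k j) = (\<lambda>i. \<Sum>k\<in>K. c k * (ap I I W ^^ n) (f k) i)"
  by (induction n) (simp_all add: ap_lc)

lemma powT_zero[simp]: "(ap I I W ^^ n) (\<lambda>j. 0) = (\<lambda>i. 0)"
  by (induction n) simp_all

lemma pact_bound: "degree p \<le> n \<Longrightarrow> pact I W p v = (\<lambda>i. \<Sum>k\<le>n. coeff p k * ((ap I I W ^^ k) v) i)"
  unfolding pact_def
  by (intro ext sum.mono_neutral_left) (auto simp: coeff_eq_0)

lemma pact_add: "pact I W (p + q) v = (\<lambda>i. pact I W p v i + pact I W q v i)"
proof -
  let ?n = "max (degree p) (degree q)"
  have "degree (p + q) \<le> ?n" by (rule degree_add_le) auto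
  then show ?thesis
    by (simp add: pact_bound[of _ ?n] pact_bound[of p ?n] pact_bound[of q ?n] distrib_right sum.distrib)
qed

lemma pact_smult: "pact I W (smult c p) v = (\<lambda>i. c * pact I W p v i)"
proof -
  have "degree (smult c p) \<le> degree p" by simp
  then show ?thesis
    by (simp add: pact_bound[of _ "degree p"] pact_def sum_distrib_left mult.assoc)
qed

lemma pact_zero_poly[simp]: "pact I W 0 v = (\<lambda>i. 0)"
  by (simp add: pact_def)

lemma pact_one[simp]: "pact I W 1 v = v"
  by (simp add: pact_def)

lemma pact_const: "pact I W [:c:] v = (\<lambda>i. c * v i)"
  by (simp add: pact_def)

lemma pact_lc: "pact I W p (\<lambda>j. \<Sum>k\<in>K. c k * f k j) = (\<lambda>i. \<Sum>k\<in>K. c k * pact I W p (f k) i)"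
  by (auto simp: pact_def powT_lc sum_distrib_left sum.swap[of _ K] ac_simps intro!: ext)

lemma pact_zero_vec[simp]: "pact I W p (\<lambda>j. 0) = (\<lambda>i. 0)"
  by (simp add: pact_def)

lemma pact_pCons: "pact I W (pCons a p) v = (\<lambda>i. a * v i + ap I I W (pact I W p v) i)"
proof -
  have d: "degree (pCons a p) \<le> Suc (degree p)" by (simp add: degree_pCons_le)
  have "ap I I W (pact I W p v) = ap I I W (\<lambda>i. \<Sum>k\<le>degree p. coeff p k * ((ap I I W ^^ k) v) i)"
    by (simp add: pact_def)
  also have "\<dots> = (\<lambda>i. \<Sum>k\<le>degree p. coeff p k * ((ap I I W ^^ Suc k) v) i)"
    by (simp add: ap_lc)
  finally have e: "ap I I W (pact I W p v) = \<dots>" .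
  show ?thesis
    unfolding pact_bound[OF d] sum.atMost_Suc_shift e by (simp del: funpow.simps add: funpow_Suc_right[symmetric])
qed

lemma pact_X: "pact I W [:0,1:] v = ap I I W v"
  by (simp add: pact_pCons)

lemma pact_mult: "pact I W (p * q) v = pact I W p (pact I W q v)"
proof (induction p)
  case 0
  then show ?case by simp
next
  case (pCons a p)
  have "pact I W (pCons a p * q) v = pact I W (smult a q + pCons 0 (p * q)) v"
    by simp
  also have "\<dots> = (\<lambda>i. a * pact I W q v i + ap I I W (pact I W p (pact I W q v)) i)"
    by (simp add: pact_add pact_smult pact_pCons pCons.IH)
  also have "\<dots> = pact I W (pCons a p) (pact I W q v)"
    by (simp add: pact_pCons)
  finally show ?case .
qed

lemma pact_comm: "pact I W (p * q) v = pact I W q (pact I W p v)"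
  by (simp add: pact_mult[symmetric] mult.commute)

lemma pact_supp: "supp I v \<Longrightarrow> supp I (pact I W p v)"
proof (induction p)
  case 0 then show ?case by (simp add: supp_def)
next
  case (pCons a p) then show ?case by (simp add: pact_pCons supp_def ap_def)
qed

lemma pact_minus: "pact I W (p - q) v = (\<lambda>i. pact I W p v i - pact I W q v i)"
proof -
  have "pact I W ((p - q) + q) v = (\<lambda>i. pact I W (p - q) v i + pact I W q v i)"
    by (rule pact_add)
  then have "\<And>i. pact I W p v i = pact I W (p - q) v i + pact I W q v i"
    by (metis diff_add_cancel)
  then show ?thesis by (auto intro!: ext simp: algebra_simps)
qed

lemma pact_sum: "pact I W (\<Sum>k\<in>K. f k) v = (\<lambda>i. \<Sum>k\<in>K. pact I W (f k) v i)"
  by (induction K rule: infinite_finite_induct) (simp_all add: pact_add)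

lemma pact_dvd_zero:
  assumes "q dvd p" "\<And>v. supp I v \<Longrightarrow> pact I W q v = (\<lambda>i. 0)" "supp I v"
  shows "pact I W p v = (\<lambda>i. 0)"
proof -
  from assms(1) obtain s where "p = q * s" by (auto elim: dvdE)
  then show ?thesis using assms by (simp add: pact_comm pact_supp)
qed


lemma lin_dep:
  assumes "finite I" "finite K" "card I < card K"
  shows "\<exists>c. (\<exists>k\<in>K. c k \<noteq> 0) \<and> (\<forall>i\<in>I. (\<Sum>k\<in>K. c k * v k i) = (0::complex))"
  using assms
proof (induction I arbitrary: K v rule: finite_induct)
  case empty
  then have "K \<noteq> {}" by auto
  then show ?case by (intro exI[of _ "\<lambda>_. 1"]) auto
next
  case (insert i I)
  show ?case
  proof (cases "\<forall>k\<in>K. v k i = 0")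
    case True
    have "card I < card K" using insert by simp
    from insert.IH[OF insert.prems(1) this] obtain c where
      c: "\<exists>k\<in>K. c k \<noteq> 0" "\<forall>t\<in>I. (\<Sum>k\<in>K. c k * v k t) = 0" by blast
    show ?thesis using c True by (intro exI[of _ c]) auto
  next
    case False
    then obtain j where j: "j \<in> K" "v j i \<noteq> 0" by auto
    define K' where "K' = K - {j}"
    define w where "w = (\<lambda>k t. v k t - (v k i / v j i) * v j t)"
    have fK': "finite K'" using insert by (simp add: K'_def)
    have cK': "card I < card K'" using insert j by (simp add: K'_def)
    from insert.IH[OF fK' cK', of w] obtain c where
      c: "\<exists>k\<in>K'. c k \<noteq> 0" "\<forall>t\<in>I. (\<Sum>k\<in>K'. c k * w k t) = 0" by blast
    define d where "d = c(j := - (\<Sum>k\<in>K'. c k * v k i) / v j i)"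
    have K: "K = insert j K'" "j \<notin> K'" using j by (auto simp: K'_def)
    have key: "(\<Sum>k\<in>K. d k * v k t) = (\<Sum>k\<in>K'. c k * w k t)" for t
    proof -
      have 1: "(\<Sum>k\<in>K. d k * v k t) = d j * v j t + (\<Sum>k\<in>K'. d k * v k t)"
        using K fK' by simp
      have 2: "(\<Sum>k\<in>K'. d k * v k t) = (\<Sum>k\<in>K'. c k * v k t)"
        using K by (intro sum.cong) (auto simp: d_def)
      have 3: "(\<Sum>k\<in>K'. c k * w k t) = (\<Sum>k\<in>K'. c k * v k t - (c k * v k i) / v j i * v j t)"
        by (intro sum.cong) (auto simp: w_def algebra_simps)
      have 4: "\<dots> = (\<Sum>k\<in>K'. c k * v k t) - (\<Sum>k\<in>K'. c k * v k i) / v j i * v j t"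
        by (simp add: sum_subtractf sum_distrib_right sum_divide_distrib)
      show ?thesis unfolding 1 2 3 4 by (simp add: d_def)
    qed
    show ?thesis
    proof (intro exI[of _ d] conjI)
      show "\<exists>k\<in>K. d k \<noteq> 0" using c(1) K by (auto simp: d_def)
      show "\<forall>t\<in>insert i I. (\<Sum>k\<in>K. d k * v k t) = 0"
      proof
        fix t assume t: "t \<in> insert i I"
        show "(\<Sum>k\<in>K. d k * v k t) = 0"
        proof (cases "t = i")
          case True
          have "w k i = 0" for k using j by (simp add: w_def)
          then show ?thesis using True key by simp
        next
          case False
          then show ?thesis using t key c(2) by auto
        qed
      qed
    qed
  qed
qed

section \<open>Annihilating polynomial\<close>

lemma annihilator:
  assumes "finite I"
  shows "\<exists>p. p \<noteq> 0 \<and> (\<forall>v. supp I v \<longrightarrow> pact I W p v = (\<lambda>i. 0))"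
proof -
  let ?T = "ap I I W"
  let ?n = "card I"
  have "\<forall>j\<in>I. \<exists>p. p \<noteq> 0 \<and> pact I W p (ev j) = (\<lambda>i. 0)"
  proof
    fix j assume j: "j \<in> I"
    have "card I < card {..?n}" by simp
    from lin_dep[OF assms _ this, of "\<lambda>k. (?T ^^ k) (ev j)"] obtain c where
      c: "\<exists>k\<in>{..?n}. c k \<noteq> 0" "\<forall>i\<in>I. (\<Sum>k\<le>?n. c k * (?T ^^ k) (ev j) i) = 0"
      by auto
    define p where "p = (\<Sum>k\<le>?n. monom (c k) k)"
    have cp: "coeff p k = (if k \<le> ?n then c k else 0)" for k
      by (simp add: p_def coeff_sum coeff_monom)
    have pnz: "p \<noteq> 0" using c(1) cp by (metis atMost_iff coeff_0)
    have dp: "degree p \<le> ?n" by (rule degree_le) (simp add: cp)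
    have "pact I W p (ev j) = (\<lambda>i. \<Sum>k\<le>?n. c k * (?T ^^ k) (ev j) i)"
      by (simp add: pact_bound[OF dp] cp)
    also have "\<dots> = (\<lambda>i. 0)"
    proof
      fix i show "(\<Sum>k\<le>?n. c k * (?T ^^ k) (ev j) i) = 0"
      proof (cases "i \<in> I")
        case True then show ?thesis using c(2) by auto
      next
        case False
        have "(?T ^^ k) (ev j) i = 0" for k
          by (cases k) (use False j in \<open>auto simp: ev_def ap_def\<close>)
        then show ?thesis by simp
      qed
    qed
    finally show "\<exists>p. p \<noteq> 0 \<and> pact I W p (ev j) = (\<lambda>i. 0)" using pnz by blast
  qed
  then obtain pj where pj: "\<And>j. j \<in> I \<Longrightarrow> pj j \<noteq> 0 \<and> pact I W (pj j) (ev j) = (\<lambda>i. 0)"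
    by metis
  define P where "P = (\<Prod>j\<in>I. pj j)"
  have Pnz: "P \<noteq> 0" using pj assms by (simp add: P_def)
  have Pev: "pact I W P (ev j) = (\<lambda>i. 0)" if "j \<in> I" for j
  proof -
    have "P = (\<Prod>j\<in>I-{j}. pj j) * pj j" using that assms by (simp add: P_def prod.remove mult.commute)
    then show ?thesis using pj[OF that] by (simp add: pact_mult)
  qed
  have "pact I W P v = (\<lambda>i. 0)" if "supp I v" for v
  proof -
    have "pact I W P v = pact I W P (\<lambda>i. \<Sum>j\<in>I. v j * ev j i)"
      by (rule arg_cong[where f="pact I W P"], rule vec_decomp[OF assms that])
    also have "\<dots> = (\<lambda>i. \<Sum>j\<in>I. v j * pact I W P (ev j) i)" by (rule pact_lc)
    also have "\<dots> = (\<lambda>i. 0)" using Pev by simp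
    finally show ?thesis .
  qed
  then show ?thesis using Pnz by blast
qed

definition ip :: "'i set \<Rightarrow> ('i \<Rightarrow> complex) \<Rightarrow> ('i \<Rightarrow> complex) \<Rightarrow> complex" where
  "ip I x y = (\<Sum>i\<in>I. x i * cnj (y i))"

lemma ip_scale_l: "ip I (\<lambda>i. c * x i) y = c * ip I x y"
  by (simp add: ip_def sum_distrib_left mult.assoc)

lemma ip_scale_r: "ip I x (\<lambda>i. c * y i) = cnj c * ip I x y"
  by (simp add: ip_def sum_distrib_left ac_simps)

lemma ip_sum_l: "ip I (\<lambda>i. \<Sum>k\<in>K. f k i) y = (\<Sum>k\<in>K. ip I (f k) y)"
  by (simp add: ip_def sum_distrib_right sum.swap[of _ I K])

lemma ip_sum_r: "ip I x (\<lambda>i. \<Sum>k\<in>K. f k i) = (\<Sum>k\<in>K. ip I x (f k))"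
  by (simp add: ip_def sum_distrib_left cnj_sum sum.swap[of _ I K])

lemma ip_diff_r: "ip I x (\<lambda>i. y i - z i) = ip I x y - ip I x z"
  by (simp add: ip_def algebra_simps sum_subtractf)

lemma ip_cnj: "cnj (ip I x y) = ip I y x"
  by (simp add: ip_def cnj_sum mult.commute)

lemma ip_ev: "finite I \<Longrightarrow> j \<in> I \<Longrightarrow> ip I x (ev j) = x j"
  by (simp add: ip_def ev_def if_distrib[of "\<lambda>x. _ * x"] if_distrib[of cnj] sum.delta' cong: if_cong)

lemma ip_self_zero:
  assumes "finite I" "supp I x" "ip I x x = 0"
  shows "x = (\<lambda>i. 0)"
proof -
  have "ip I x x = (\<Sum>i\<in>I. of_real ((cmod (x i))\<^sup>2))"
    unfolding ip_def by (intro sum.cong refl) (simp only: complex_norm_square)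
  also have "\<dots> = of_real (\<Sum>i\<in>I. (cmod (x i))\<^sup>2)" by simp
  finally have "ip I x x = of_real (\<Sum>i\<in>I. (cmod (x i))\<^sup>2)" .
  then have "(\<Sum>i\<in>I. (cmod (x i))\<^sup>2) = 0" using assms(3) by (metis of_real_eq_0_iff)
  then have "\<forall>i\<in>I. (cmod (x i))\<^sup>2 = 0" using assms(1) by (subst (asm) sum_nonneg_eq_0_iff) auto
  then show ?thesis using assms(2) by (auto simp: supp_def intro!: ext)
qed

section \<open>Unitary operators\<close>

locale unit_op =
  fixes I :: "'i set" and W Wa :: "'i \<Rightarrow> 'i \<Rightarrow> complex"
  assumes fin: "finite I"
    and adj: "\<And>i j. i \<in> I \<Longrightarrow> j \<in> I \<Longrightarrow> Wa i j = cnj (W j i)"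
    and inv1: "mat_eq_on I I (mmult I I I Wa W) (idm I)"
    and inv2: "mat_eq_on I I (mmult I I I W Wa) (idm I)"
begin

lemma adjT: "ip I (ap I I W x) y = ip I x (ap I I Wa y)"
proof -
  have "ip I (ap I I W x) y = (\<Sum>i\<in>I. \<Sum>j\<in>I. W i j * x j * cnj (y i))"
    by (simp add: ip_def ap_def sum_distrib_right)
  also have "\<dots> = (\<Sum>j\<in>I. \<Sum>i\<in>I. x j * cnj (Wa j i * y i))"
    by (subst sum.swap) (auto intro!: sum.cong simp: adj)
  also have "\<dots> = ip I x (ap I I Wa y)"
    by (simp add: ip_def ap_def sum_distrib_left cnj_sum)
  finally show ?thesis .
qed

lemma TT': "supp I x \<Longrightarrow> ap I I Wa (ap I I W x) = x"
  using ap_mmult[of I I "I" Wa W x, symmetric] ap_cong[OF inv1, of x] ap_idm[OF fin, of x] by simp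

lemma T'T: "supp I x \<Longrightarrow> ap I I W (ap I I Wa x) = x"
  using ap_mmult[of I I "I" W Wa x, symmetric] ap_cong[OF inv2, of x] ap_idm[OF fin, of x] by simp

lemma eig_adj:
  assumes w: "supp I w" and e: "ap I I W w = (\<lambda>i. z * w i)"
  shows "ap I I Wa w = (\<lambda>i. cnj z * w i)"
proof (cases "w = (\<lambda>i. 0)")
  case True then show ?thesis by simp
next
  case False
  then have nz: "ip I w w \<noteq> 0" using ip_self_zero[OF fin w] by blast
  have "ip I (ap I I W w) (ap I I W w) = ip I w w"
    by (simp add: adjT TT' w)
  then have "z * cnj z * ip I w w = ip I w w" using e by (simp add: ip_scale_l ip_scale_r mult.assoc)
  then have zz: "cnj z * z = 1" using nz by (simp add: mult.commute)
  have "w = ap I I Wa (ap I I W w)" by (simp add: TT' w)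
  also have "\<dots> = (\<lambda>i. z * ap I I Wa w i)" using e by (simp add: ap_scale)
  finally have "\<And>i. w i = z * ap I I Wa w i" by metis
  then have "\<And>i. cnj z * w i = ap I I Wa w i" using zz by (metis mult.assoc mult_1)
  then show ?thesis by auto
qed

lemma pact_lin1: "pact I W [:-z,1:] v = (\<lambda>i. ap I I W v i - z * v i)"
  by (simp add: pact_pCons pact_const)

lemma normal_red:
  assumes u: "supp I u"
    and nn: "pact I W [:-z,1:] (pact I W [:-z,1:] u) = (\<lambda>i. 0)"
  shows "pact I W [:-z,1:] u = (\<lambda>i. 0)"
proof -
  define w where "w = pact I W [:-z,1:] u"
  have ws: "supp I w" unfolding w_def by (rule pact_supp[OF u])
  have wd: "w = (\<lambda>i. ap I I W u i - z * u i)" unfolding w_def by (rule pact_lin1)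
  have nn': "pact I W [:-z,1:] w = (\<lambda>i. 0)" using nn unfolding w_def .
  have "ap I I W w = (\<lambda>i. z * w i)"
  proof
    fix i
    have "ap I I W w i - z * w i = 0" using fun_cong[OF nn', of i] unfolding pact_lin1 .
    then show "ap I I W w i = z * w i" by simp
  qed
  then have a: "ap I I Wa w = (\<lambda>i. cnj z * w i)" by (rule eig_adj[OF ws])
  have 1: "ip I w (ap I I W u) = cnj z * ip I w u"
  proof -
    have "ip I w (ap I I W u) = cnj (ip I (ap I I W u) w)" by (simp only: ip_cnj)
    also have "\<dots> = cnj (ip I u (ap I I Wa w))" by (simp only: adjT)
    also have "\<dots> = cnj (cnj (cnj z) * ip I u w)" by (simp only: a ip_scale_r)
    also have "\<dots> = cnj z * ip I w u" by (simp only: ip_cnj complex_cnj_mult complex_cnj_cnj)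
    finally show ?thesis .
  qed
  have "ip I w w = ip I w (\<lambda>i. ap I I W u i - z * u i)"
    by (subst wd[symmetric]) (rule refl)
  also have "\<dots> = ip I w (ap I I W u) - cnj z * ip I w u"
    by (simp only: ip_diff_r ip_scale_r)
  finally have "ip I w w = 0" using 1 by simp
  then show ?thesis using ip_self_zero[OF fin ws] by (simp add: w_def)
qed

lemma red_single_aux:
  assumes "supp I u" "pact I W ([:-z,1:] ^ Suc m) u = (\<lambda>i. 0)"
  shows "pact I W [:-z,1:] u = (\<lambda>i. 0)"
  using assms
proof (induction m arbitrary: u)
  case 0 then show ?case by simp
next
  case (Suc m)
  have "pact I W ([:-z,1:] ^ Suc m) (pact I W [:-z,1:] u) = (\<lambda>i. 0)"
    using Suc.prems(2) by (simp only: power_Suc2 pact_mult)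
  then have "pact I W [:-z,1:] (pact I W [:-z,1:] u) = (\<lambda>i. 0)"
    by (rule Suc.IH[OF pact_supp[OF Suc.prems(1)]])
  then show ?case by (rule normal_red[OF Suc.prems(1)])
qed

lemma red_single:
  assumes "\<forall>v. supp I v \<longrightarrow> pact I W ([:-z,1:] ^ m * r) v = (\<lambda>i. 0)" "1 \<le> m"
  shows "\<forall>v. supp I v \<longrightarrow> pact I W ([:-z,1:] * r) v = (\<lambda>i. 0)"
proof (intro allI impI)
  fix v assume v: "supp I v"
  obtain k where m: "m = Suc k" using assms(2) by (cases m) auto
  have "pact I W ([:-z,1:] ^ Suc k) (pact I W r v) = (\<lambda>i. 0)"
    using assms(1) v m by (simp add: pact_mult)
  then have "pact I W [:-z,1:] (pact I W r v) = (\<lambda>i. 0)"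
    by (rule red_single_aux[OF pact_supp[OF v]])
  then show "pact I W ([:-z,1:] * r) v = (\<lambda>i. 0)" by (simp only: pact_mult)
qed

lemma red_prod:
  assumes "finite R" "\<forall>z\<in>R. 1 \<le> m z"
    "\<forall>v. supp I v \<longrightarrow> pact I W ((\<Prod>z\<in>R. [:-z,1:] ^ m z) * r) v = (\<lambda>i. 0)"
  shows "\<forall>v. supp I v \<longrightarrow> pact I W ((\<Prod>z\<in>R. [:-z,1:]) * r) v = (\<lambda>i. 0)"
  using assms
proof (induction R arbitrary: r rule: finite_induct)
  case empty then show ?case by simp
next
  case (insert z R)
  have "\<forall>v. supp I v \<longrightarrow> pact I W ((\<Prod>z\<in>R. [:-z,1:] ^ m z) * ([:-z,1:] ^ m z * r)) v = (\<lambda>i. 0)"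
    using insert.prems(2) insert.hyps by (simp add: ac_simps)
  then have "\<forall>v. supp I v \<longrightarrow> pact I W ((\<Prod>z\<in>R. [:-z,1:]) * ([:-z,1:] ^ m z * r)) v = (\<lambda>i. 0)"
    using insert.IH insert.prems(1) by simp
  then have "\<forall>v. supp I v \<longrightarrow> pact I W ([:-z,1:] ^ m z * ((\<Prod>z\<in>R. [:-z,1:]) * r)) v = (\<lambda>i. 0)"
    by (simp add: ac_simps)
  then have "\<forall>v. supp I v \<longrightarrow> pact I W ([:-z,1:] * ((\<Prod>z\<in>R. [:-z,1:]) * r)) v = (\<lambda>i. 0)"
    using red_single insert.prems(1) by blast
  then show ?case using insert.hyps by (simp add: ac_simps)
qed

lemma exists_Z:
  "\<exists>Z. finite Z \<and> (\<forall>v. supp I v \<longrightarrow> pact I W (\<Prod>z\<in>Z. [:-z,1:]) v = (\<lambda>i. 0))"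
proof -
  obtain P where P: "P \<noteq> 0" "\<forall>v. supp I v \<longrightarrow> pact I W P v = (\<lambda>i. 0)"
    using annihilator[OF fin] by blast
  define R where "R = {z. poly P z = 0}"
  have fR: "finite R" using P(1) by (simp add: R_def poly_roots_finite)
  have dec: "smult (lead_coeff P) (\<Prod>z\<in>R. [:-z, 1:] ^ order z P) = P"
    unfolding R_def by (rule complex_poly_decompose)
  have lc: "lead_coeff P \<noteq> 0" using P(1) by simp
  have A: "\<forall>v. supp I v \<longrightarrow> pact I W ((\<Prod>z\<in>R. [:-z, 1:] ^ order z P) * 1) v = (\<lambda>i. 0)"
  proof (intro allI impI)
    fix v assume v: "supp I v"
    have "pact I W P v = (\<lambda>i. lead_coeff P * pact I W (\<Prod>z\<in>R. [:-z, 1:] ^ order z P) v i)"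
      by (subst dec[symmetric]) (simp add: pact_smult)
    then show "pact I W ((\<Prod>z\<in>R. [:-z, 1:] ^ order z P) * 1) v = (\<lambda>i. 0)"
      using P(2) v lc by (auto intro!: ext dest: fun_cong)
  qed
  have B: "\<forall>z\<in>R. 1 \<le> order z P"
    using P(1) by (auto simp: R_def order_root Suc_le_eq)
  have "\<forall>v. supp I v \<longrightarrow> pact I W ((\<Prod>z\<in>R. [:-z,1:]) * 1) v = (\<lambda>i. 0)"
    by (rule red_prod[OF fR B A])
  then show ?thesis using fR by auto
qed

end


definition qZ :: "complex set \<Rightarrow> complex poly" where
  "qZ Z = (\<Prod>z\<in>Z. [:-z,1:])"

definition lag :: "complex set \<Rightarrow> complex \<Rightarrow> complex poly" where
  "lag Z a = smult (inverse (\<Prod>m\<in>Z-{a}. a - m)) (\<Prod>m\<in>Z-{a}. [:-m,1:])"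

lemma poly_lag:
  assumes "finite Z" "a \<in> Z" "b \<in> Z"
  shows "poly (lag Z a) b = (if b = a then 1 else 0)"
proof (cases "b = a")
  case True
  have "(\<Prod>m\<in>Z-{a}. a - m) \<noteq> 0" using assms by (simp add: prod_zero_iff)
  then show ?thesis using True by (simp add: lag_def poly_prod)
next
  case False
  have "(\<Prod>m\<in>Z-{a}. b - m) = 0" using assms False by (simp add: prod_zero_iff)
  then show ?thesis using False by (simp add: lag_def poly_prod)
qed

lemma dvd_vanish:
  assumes "finite Z" "\<forall>z\<in>Z. poly f z = 0"
  shows "qZ Z dvd f"
  using assms
proof (induction Z arbitrary: f rule: finite_induct)
  case empty then show ?case by (simp add: qZ_def)
next
  case (insert z Z)
  have "[:-z,1:] dvd f" using insert.prems by (simp add: poly_eq_0_iff_dvd[symmetric])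
  then obtain g where g: "f = [:-z,1:] * g" by (auto elim: dvdE)
  have "\<forall>m\<in>Z. poly g m = 0"
  proof
    fix m assume m: "m \<in> Z"
    then have "m \<noteq> z" using insert.hyps by auto
    moreover have "poly f m = 0" using insert.prems m by auto
    ultimately show "poly g m = 0" using g by simp
  qed
  then have "qZ Z dvd g" by (rule insert.IH)
  then have "[:-z,1:] * qZ Z dvd [:-z,1:] * g" by (rule mult_dvd_mono[OF dvd_refl])
  then show ?case using insert.hyps g by (simp add: qZ_def)
qed

lemma sum_delta_mult:
  assumes "finite Z" "z \<in> Z"
  shows "(\<Sum>x\<in>Z. f x * (if z = x then 1 else 0)) = (f z :: complex)"
proof -
  have "(\<Sum>x\<in>Z. f x * (if z = x then 1 else 0)) = (\<Sum>x\<in>Z. if z = x then f x else 0)"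
    by (rule sum.cong) auto
  then show ?thesis using assms by simp
qed

section \<open>Spectral decomposition: construction\<close>

locale spec_op = unit_op +
  fixes Z :: "complex set"
  assumes finZ: "finite Z"
    and annZ: "\<forall>v. supp I v \<longrightarrow> pact I W (qZ Z) v = (\<lambda>i. 0)"
begin

lemma pact_eqZ:
  assumes "\<forall>z\<in>Z. poly f z = poly g z" "supp I v"
  shows "pact I W f v = pact I W g v"
proof -
  have "qZ Z dvd (f - g)" using assms(1) by (intro dvd_vanish finZ) simp
  then have "pact I W (f - g) v = (\<lambda>i. 0)"
    using pact_dvd_zero annZ assms(2) by blast
  then show ?thesis by (auto simp: pact_minus dest: fun_cong intro!: ext)
qed

abbreviation "Fop a \<equiv> pact I W (lag Z a)"

lemma sum_lag:
  assumes "supp I v"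
  shows "(\<lambda>i. \<Sum>a\<in>Z. Fop a v i) = v"
proof -
  have "pact I W (\<Sum>a\<in>Z. lag Z a) v = pact I W 1 v"
    by (rule pact_eqZ[OF _ assms]) (simp add: poly_sum poly_lag finZ if_distrib cong: sum.cong)
  then show ?thesis by (simp add: pact_sum)
qed

lemma sum_lag_x:
  assumes "supp I v"
  shows "(\<lambda>i. \<Sum>a\<in>Z. a * Fop a v i) = ap I I W v"
proof -
  have "pact I W (\<Sum>a\<in>Z. smult a (lag Z a)) v = pact I W [:0,1:] v"
  proof (rule pact_eqZ[OF _ assms], intro ballI)
    fix z assume z: "z \<in> Z"
    have "poly (\<Sum>a\<in>Z. smult a (lag Z a)) z = (\<Sum>a\<in>Z. a * (if z = a then 1 else 0))"
      by (simp add: poly_sum poly_lag finZ z cong: sum.cong)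
    also have "\<dots> = z" by (rule sum_delta_mult[OF finZ z])
    finally show "poly (\<Sum>a\<in>Z. smult a (lag Z a)) z = poly [:0,1:] z" by simp
  qed
  then show ?thesis by (simp add: pact_sum pact_smult pact_X)
qed

lemma Fop_orth:
  assumes "supp I v" "a \<in> Z" "b \<in> Z" "a \<noteq> b"
  shows "Fop a (Fop b v) = (\<lambda>i. 0)"
proof -
  have "pact I W (lag Z a * lag Z b) v = pact I W 0 v"
    by (rule pact_eqZ[OF _ assms(1)]) (use assms in \<open>simp add: poly_lag finZ\<close>)
  then show ?thesis by (simp add: pact_mult)
qed

lemma Fop_idem:
  assumes "supp I v" "a \<in> Z"
  shows "Fop a (Fop a v) = Fop a v"
proof -
  have "pact I W (lag Z a * lag Z a) v = pact I W (lag Z a) v"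
    by (rule pact_eqZ[OF _ assms(1)]) (use assms in \<open>simp add: poly_lag finZ\<close>)
  then show ?thesis by (simp add: pact_mult)
qed

lemma Fop_eig:
  assumes "supp I v" "a \<in> Z"
  shows "ap I I W (Fop a v) = (\<lambda>i. a * Fop a v i)"
proof -
  have "pact I W ([:0,1:] * lag Z a) v = pact I W (smult a (lag Z a)) v"
    by (rule pact_eqZ[OF _ assms(1)]) (use assms in \<open>simp add: poly_lag finZ\<close>)
  then show ?thesis by (simp only: pact_mult pact_smult pact_X)
qed

lemma Fop_supp: "supp I v \<Longrightarrow> supp I (Fop a v)"
  by (rule pact_supp)

lemma Fop_ip_orth:
  assumes "supp I x" "supp I y" "a \<in> Z" "b \<in> Z" "a \<noteq> b"
  shows "ip I (Fop a x) (Fop b y) = 0"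
proof -
  let ?p = "Fop a x" and ?q = "Fop b y"
  have q: "supp I ?q" by (rule Fop_supp[OF assms(2)])
  have Tq: "ap I I Wa ?q = (\<lambda>i. cnj b * ?q i)"
    by (rule eig_adj[OF q Fop_eig[OF assms(2,4)]])
  have "a * ip I ?p ?q = ip I (ap I I W ?p) ?q"
    by (simp add: Fop_eig[OF assms(1,3)] ip_scale_l)
  also have "\<dots> = ip I ?p (ap I I Wa ?q)" by (rule adjT)
  also have "\<dots> = b * ip I ?p ?q" by (simp add: Tq ip_scale_r)
  finally have "(a - b) * ip I ?p ?q = 0" by (simp add: algebra_simps)
  then show ?thesis using assms(5) by simp
qed

lemma Fop_ip_self:
  assumes "supp I x" "supp I y" "a \<in> Z"
  shows "ip I (Fop a x) y = ip I (Fop a x) (Fop a y)" "ip I x (Fop a y) = ip I (Fop a x) (Fop a y)"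
proof -
  have "ip I (Fop a x) y = ip I (Fop a x) (\<lambda>i. \<Sum>b\<in>Z. Fop b y i)"
    by (simp add: sum_lag[OF assms(2)])
  also have "\<dots> = (\<Sum>b\<in>Z. ip I (Fop a x) (Fop b y))" by (rule ip_sum_r)
  also have "\<dots> = (\<Sum>b\<in>Z. if b = a then ip I (Fop a x) (Fop a y) else 0)"
    by (intro sum.cong refl) (use Fop_ip_orth[OF assms(1,2) assms(3)] in auto)
  also have "\<dots> = ip I (Fop a x) (Fop a y)" using assms(3) finZ by simp
  finally show "ip I (Fop a x) y = ip I (Fop a x) (Fop a y)" .
  have "ip I x (Fop a y) = ip I (\<lambda>i. \<Sum>b\<in>Z. Fop b x i) (Fop a y)"
    by (simp add: sum_lag[OF assms(1)])
  also have "\<dots> = (\<Sum>b\<in>Z. ip I (Fop b x) (Fop a y))" by (rule ip_sum_l)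
  also have "\<dots> = (\<Sum>b\<in>Z. if b = a then ip I (Fop a x) (Fop a y) else 0)"
    by (intro sum.cong refl) (use Fop_ip_orth[OF assms(1,2) _ assms(3)] in auto)
  also have "\<dots> = ip I (Fop a x) (Fop a y)" using assms(3) finZ by simp
  finally show "ip I x (Fop a y) = ip I (Fop a x) (Fop a y)" .
qed

definition Fm :: "complex \<Rightarrow> 'a \<Rightarrow> 'a \<Rightarrow> complex" where
  "Fm a = (\<lambda>i j. Fop a (ev j) i)"

definition S0 :: "complex set" where
  "S0 = {a\<in>Z. \<exists>i\<in>I. \<exists>j\<in>I. Fm a i j \<noteq> 0}"

lemma supp_ev: "j \<in> I \<Longrightarrow> supp I (ev j)"
  by (auto simp: supp_def ev_def)

lemma Fm_ap:
  assumes "supp I v"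
  shows "ap I I (Fm a) v = Fop a v"
proof -
  have "Fop a v = Fop a (\<lambda>i. \<Sum>j\<in>I. v j * ev j i)"
    by (rule arg_cong[where f="Fop a"], rule vec_decomp[OF fin assms])
  also have "\<dots> = (\<lambda>i. \<Sum>j\<in>I. v j * Fop a (ev j) i)" by (rule pact_lc)
  finally have e: "Fop a v = \<dots>" .
  have s: "supp I (Fop a v)" by (rule Fop_supp[OF assms])
  show ?thesis
  proof
    fix i show "ap I I (Fm a) v i = Fop a v i"
    proof (cases "i \<in> I")
      case True then show ?thesis by (simp add: ap_def Fm_def e mult.commute)
    next
      case False then show ?thesis using s by (simp add: ap_def supp_def)
    qed
  qed
qed

lemma Fm_mmult:
  assumes "a \<in> Z" "i \<in> I" "j \<in> I"
  shows "mmult I I I (Fm a) (Fm b) i j = Fop a (Fop b (ev j)) i"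
proof -
  have "mmult I I I (Fm a) (Fm b) i j = ap I I (Fm a) (Fop b (ev j)) i"
    using assms by (simp add: mmult_def ap_def Fm_def)
  also have "\<dots> = Fop a (Fop b (ev j)) i"
    by (simp add: Fm_ap Fop_supp supp_ev assms)
  finally show ?thesis .
qed

lemma sd_exists: "spectral_decomposition I W S0 Fm"
proof -
  have 1: "finite S0" using finZ by (simp add: S0_def)
  have 2: "\<forall>a\<in>S0. (\<exists>i\<in>I. \<exists>j\<in>I. Fm a i j \<noteq> 0) \<and>
             (\<forall>i\<in>I. \<forall>j\<in>I. Fm a i j = cnj (Fm a j i)) \<and>
             mat_eq_on I I (mmult I I I (Fm a) (Fm a)) (Fm a)"
  proof
    fix a assume a: "a \<in> S0"
    then have aZ: "a \<in> Z" by (simp add: S0_def)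
    have h1: "\<exists>i\<in>I. \<exists>j\<in>I. Fm a i j \<noteq> 0" using a by (simp add: S0_def)
    have h2: "\<forall>i\<in>I. \<forall>j\<in>I. Fm a i j = cnj (Fm a j i)"
    proof (intro ballI)
      fix i j assume ij: "i \<in> I" "j \<in> I"
      have "Fm a i j = ip I (Fop a (ev j)) (ev i)" by (simp add: Fm_def ip_ev fin ij)
      also have "\<dots> = ip I (ev j) (Fop a (ev i))"
        using Fop_ip_self[OF supp_ev supp_ev aZ, of j i] ij by simp
      also have "\<dots> = cnj (ip I (Fop a (ev i)) (ev j))"
        by (simp only: ip_cnj)
      also have "\<dots> = cnj (Fm a j i)"
        by (simp add: Fm_def ip_ev fin ij)
      finally show "Fm a i j = cnj (Fm a j i)" .
    qed
    have h3: "mat_eq_on I I (mmult I I I (Fm a) (Fm a)) (Fm a)"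
    proof (unfold mat_eq_on_def, intro ballI)
      fix i j assume ij: "i \<in> I" "j \<in> I"
      have "mmult I I I (Fm a) (Fm a) i j = Fop a (Fop a (ev j)) i" by (rule Fm_mmult[OF aZ ij])
      also have "\<dots> = Fop a (ev j) i" by (simp only: Fop_idem[OF supp_ev[OF ij(2)] aZ])
      finally show "mmult I I I (Fm a) (Fm a) i j = Fm a i j" by (simp only: Fm_def)
    qed
    show "(\<exists>i\<in>I. \<exists>j\<in>I. Fm a i j \<noteq> 0) \<and>
             (\<forall>i\<in>I. \<forall>j\<in>I. Fm a i j = cnj (Fm a j i)) \<and>
             mat_eq_on I I (mmult I I I (Fm a) (Fm a)) (Fm a)" using h1 h2 h3 by blast
  qed
  have 3: "\<forall>a\<in>S0. \<forall>b\<in>S0. a \<noteq> b \<longrightarrow> mat_eq_on I I (mmult I I I (Fm a) (Fm b)) (\<lambda>_ _. 0)"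
  proof (intro ballI impI)
    fix a b assume ab: "a \<in> S0" "b \<in> S0" "a \<noteq> b"
    show "mat_eq_on I I (mmult I I I (Fm a) (Fm b)) (\<lambda>_ _. 0)"
    proof (unfold mat_eq_on_def, intro ballI)
      fix i j assume ij: "i \<in> I" "j \<in> I"
      have aZ: "a \<in> Z" "b \<in> Z" using ab by (auto simp: S0_def)
      have "mmult I I I (Fm a) (Fm b) i j = Fop a (Fop b (ev j)) i" by (rule Fm_mmult[OF aZ(1) ij])
      also have "\<dots> = 0" by (simp only: Fop_orth[OF supp_ev[OF ij(2)] aZ ab(3)])
      finally show "mmult I I I (Fm a) (Fm b) i j = 0" .
    qed
  qed
  have sZ: "(\<Sum>a\<in>S0. f a * Fm a i j) = (\<Sum>a\<in>Z. f a * Fm a i j)" if "i \<in> I" "j \<in> I" for f i j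
    using that finZ by (intro sum.mono_neutral_left) (auto simp: S0_def)
  have 4: "mat_eq_on I I (\<lambda>i j. \<Sum>a\<in>S0. Fm a i j) (idm I)"
  proof (unfold mat_eq_on_def, intro ballI)
    fix i j assume ij: "i \<in> I" "j \<in> I"
    have "(\<Sum>a\<in>S0. Fm a i j) = (\<Sum>a\<in>Z. 1 * Fm a i j)" using sZ[OF ij, of "\<lambda>_. 1"] by simp
    also have "\<dots> = ev j i" using fun_cong[OF sum_lag[OF supp_ev[OF ij(2)]], of i] by (simp add: Fm_def)
    finally show "(\<Sum>a\<in>S0. Fm a i j) = idm I i j" using ij by (simp add: ev_def idm_def)
  qed
  have 5: "mat_eq_on I I W (\<lambda>i j. \<Sum>a\<in>S0. a * Fm a i j)"
  proof (unfold mat_eq_on_def, intro ballI)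
    fix i j assume ij: "i \<in> I" "j \<in> I"
    have "(\<Sum>a\<in>S0. a * Fm a i j) = (\<Sum>a\<in>Z. a * Fm a i j)" using sZ[OF ij] by simp
    also have "\<dots> = ap I I W (ev j) i" using fun_cong[OF sum_lag_x[OF supp_ev[OF ij(2)]], of i]
      by (simp add: Fm_def)
    also have "\<dots> = W i j" using ij fin by (simp add: ap_ev)
    finally show "W i j = (\<Sum>a\<in>S0. a * Fm a i j)" by simp
  qed
  show ?thesis unfolding spectral_decomposition_def using 1 2 3 4 5 by blast
qed

end


section \<open>Uniqueness of spectral decomposition\<close>

lemma mmult_sum_left_in:
  "i \<in> I \<Longrightarrow> j \<in> J \<Longrightarrow> mmult I K J (\<lambda>i k. \<Sum>b\<in>B. f b i k) C i j = (\<Sum>b\<in>B. mmult I K J (f b) C i j)"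
  by (simp add: mmult_def sum_distrib_right sum.swap[of _ K B])

lemma mmult_sum_right_in:
  "i \<in> I \<Longrightarrow> j \<in> J \<Longrightarrow> mmult I K J A (\<lambda>k j. \<Sum>b\<in>B. f b k j) i j = (\<Sum>b\<in>B. mmult I K J A (f b) i j)"
  by (simp add: mmult_def sum_distrib_left sum.swap[of _ K B])

lemma mmult_scale_left_in:
  "mmult I K J (\<lambda>i k. c * A i k) C i j = c * mmult I K J A C i j"
  by (simp add: mmult_def sum_distrib_left mult.assoc)

lemma mmult_scale_right_in:
  "mmult I K J A (\<lambda>k j. c * C k j) i j = c * mmult I K J A C i j"
  by (simp add: mmult_def sum_distrib_left ac_simps)

lemma sd_WF:
  assumes sd: "spectral_decomposition I W S F" and a: "a \<in> S" and ij: "i \<in> I" "j \<in> I"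
  shows "mmult I I I W (F a) i j = a * F a i j" "mmult I I I (F a) W i j = a * F a i j"
proof -
  from sd have fS: "finite S"
    and idem: "\<And>a. a \<in> S \<Longrightarrow> mat_eq_on I I (mmult I I I (F a) (F a)) (F a)"
    and orth: "\<And>a b. a \<in> S \<Longrightarrow> b \<in> S \<Longrightarrow> a \<noteq> b \<Longrightarrow> mat_eq_on I I (mmult I I I (F a) (F b)) (\<lambda>_ _. 0)"
    and Wd: "mat_eq_on I I W (\<lambda>i j. \<Sum>a\<in>S. a * F a i j)"
    unfolding spectral_decomposition_def by blast+
  have delta: "(\<Sum>b\<in>S. b * mmult I I I (F b) (F a) i j) = a * F a i j"
              "(\<Sum>b\<in>S. b * mmult I I I (F a) (F b) i j) = a * F a i j"
  proof -
    have "(\<Sum>b\<in>S. b * mmult I I I (F b) (F a) i j) = (\<Sum>b\<in>S. if b = a then a * F a i j else 0)"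
      using idem[OF a] orth[OF _ a] orth[OF a] ij by (intro sum.cong refl) (auto simp: mat_eq_on_def)
    then show "(\<Sum>b\<in>S. b * mmult I I I (F b) (F a) i j) = a * F a i j" using fS a by simp
    have "(\<Sum>b\<in>S. b * mmult I I I (F a) (F b) i j) = (\<Sum>b\<in>S. if b = a then a * F a i j else 0)"
      using idem[OF a] orth[OF _ a] orth[OF a] ij by (intro sum.cong refl) (auto simp: mat_eq_on_def)
    then show "(\<Sum>b\<in>S. b * mmult I I I (F a) (F b) i j) = a * F a i j" using fS a by simp
  qed
  have "mmult I I I W (F a) i j = mmult I I I (\<lambda>i j. \<Sum>b\<in>S. b * F b i j) (F a) i j"
    by (rule fun_cong[OF fun_cong[OF mmult_cong[OF Wd]]]) (simp add: mat_eq_on_def)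
  also have "\<dots> = (\<Sum>b\<in>S. b * mmult I I I (F b) (F a) i j)"
    using ij by (simp add: mmult_sum_left_in mmult_scale_left_in)
  finally show "mmult I I I W (F a) i j = a * F a i j" using delta by simp
  have "mmult I I I (F a) W i j = mmult I I I (F a) (\<lambda>i j. \<Sum>b\<in>S. b * F b i j) i j"
    by (rule fun_cong[OF fun_cong[OF mmult_cong[OF _ Wd]]]) (simp add: mat_eq_on_def)
  also have "\<dots> = (\<Sum>b\<in>S. b * mmult I I I (F a) (F b) i j)"
    using ij by (simp add: mmult_sum_right_in mmult_scale_right_in)
  finally show "mmult I I I (F a) W i j = a * F a i j" using delta by simp
qed

lemma sd_cross:
  assumes sd: "spectral_decomposition I W S F" and sd': "spectral_decomposition I W S' F'"
    and a: "a \<in> S" and b: "b \<in> S'" and ab: "a \<noteq> b" and ij: "i \<in> I" "j \<in> I"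
  shows "mmult I I I (F a) (F' b) i j = 0"
proof -
  have e1: "mat_eq_on I I (\<lambda>i j. a * F a i j) (mmult I I I (F a) W)"
    using sd_WF(2)[OF sd a] by (simp add: mat_eq_on_def)
  have e2: "mat_eq_on I I (mmult I I I W (F' b)) (\<lambda>i j. b * F' b i j)"
    using sd_WF(1)[OF sd' b] by (simp add: mat_eq_on_def)
  have "a * mmult I I I (F a) (F' b) i j = mmult I I I (\<lambda>i j. a * F a i j) (F' b) i j"
    by (simp add: mmult_scale_left_in)
  also have "\<dots> = mmult I I I (mmult I I I (F a) W) (F' b) i j"
    by (rule fun_cong[OF fun_cong[OF mmult_cong[OF e1]]]) (simp add: mat_eq_on_def)
  also have "\<dots> = mmult I I I (F a) (mmult I I I W (F' b)) i j" by (simp add: mmult_assoc)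
  also have "\<dots> = mmult I I I (F a) (\<lambda>i j. b * F' b i j) i j"
    by (rule fun_cong[OF fun_cong[OF mmult_cong[OF _ e2]]]) (simp add: mat_eq_on_def)
  also have "\<dots> = b * mmult I I I (F a) (F' b) i j" by (simp add: mmult_scale_right_in)
  finally have "(a - b) * mmult I I I (F a) (F' b) i j = 0" by (simp add: algebra_simps)
  then show ?thesis using ab by simp
qed

lemma sd_unique1:
  assumes fin: "finite I" and sd: "spectral_decomposition I W S F" and sd': "spectral_decomposition I W S' F'"
    and a: "a \<in> S"
  shows "a \<in> S' \<and> mat_eq_on I I (F a) (F' a)"
proof -
  from sd have fS: "finite S" and nz: "\<exists>i\<in>I. \<exists>j\<in>I. F a i j \<noteq> 0"
    and sumS: "mat_eq_on I I (\<lambda>i j. \<Sum>a\<in>S. F a i j) (idm I)"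
    unfolding spectral_decomposition_def using a by blast+
  from sd' have fS': "finite S'"
    and sumS': "mat_eq_on I I (\<lambda>i j. \<Sum>a\<in>S'. F' a i j) (idm I)"
    unfolding spectral_decomposition_def by blast+
  have Fa: "F a i j = (\<Sum>b\<in>S'. mmult I I I (F a) (F' b) i j)" if ij: "i \<in> I" "j \<in> I" for i j
  proof -
    have "F a i j = mmult I I I (F a) (idm I) i j" using ij fin by (simp add: mmult_idm_right)
    also have "\<dots> = mmult I I I (F a) (\<lambda>i j. \<Sum>b\<in>S'. F' b i j) i j"
      by (rule fun_cong[OF fun_cong[OF mmult_cong]]) (use sumS' in \<open>auto simp: mat_eq_on_def\<close>)
    also have "\<dots> = (\<Sum>b\<in>S'. mmult I I I (F a) (F' b) i j)" using ij by (simp add: mmult_sum_right_in)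
    finally show ?thesis .
  qed
  have aS': "a \<in> S'"
  proof (rule ccontr)
    assume "a \<notin> S'"
    then have "F a i j = 0" if "i \<in> I" "j \<in> I" for i j
      using Fa[OF that] sd_cross[OF sd sd' a _ _ that] by (metis (mono_tags, lifting) sum.neutral)
    then show False using nz by blast
  qed
  have "F a i j = F' a i j" if ij: "i \<in> I" "j \<in> I" for i j
  proof -
    have "F a i j = (\<Sum>b\<in>S'. if b = a then mmult I I I (F a) (F' a) i j else 0)"
      unfolding Fa[OF ij] using sd_cross[OF sd sd' a _ _ ij] by (intro sum.cong) auto
    also have "\<dots> = mmult I I I (F a) (F' a) i j" using fS' aS' by simp
    finally have 1: "F a i j = mmult I I I (F a) (F' a) i j" .
    have "F' a i j = mmult I I I (idm I) (F' a) i j" using ij fin by (simp add: mmult_idm_left)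
    also have "\<dots> = mmult I I I (\<lambda>i j. \<Sum>b\<in>S. F b i j) (F' a) i j"
      by (rule fun_cong[OF fun_cong[OF mmult_cong]]) (use sumS in \<open>auto simp: mat_eq_on_def\<close>)
    also have "\<dots> = (\<Sum>b\<in>S. mmult I I I (F b) (F' a) i j)" using ij by (simp add: mmult_sum_left_in)
    also have "\<dots> = (\<Sum>b\<in>S. if b = a then mmult I I I (F a) (F' a) i j else 0)"
      using sd_cross[OF sd sd' _ aS' _ ij] by (intro sum.cong) auto
    also have "\<dots> = mmult I I I (F a) (F' a) i j" using fS a by simp
    finally show ?thesis using 1 by simp
  qed
  then show ?thesis using aS' by (simp add: mat_eq_on_def)
qed

lemma sd_unique:
  assumes fin: "finite I" and sd: "spectral_decomposition I W S F" and sd': "spectral_decomposition I W S' F'"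
  shows "S = S'" "\<And>a i j. a \<in> S \<Longrightarrow> i \<in> I \<Longrightarrow> j \<in> I \<Longrightarrow> F a i j = F' a i j"
proof -
  show "S = S'" using sd_unique1[OF fin sd sd'] sd_unique1[OF fin sd' sd] by blast
  show "\<And>a i j. a \<in> S \<Longrightarrow> i \<in> I \<Longrightarrow> j \<in> I \<Longrightarrow> F a i j = F' a i j"
    using sd_unique1[OF fin sd sd'] by (simp add: mat_eq_on_def)
qed

context spec_op begin

lemma ph_formula:
  "principal_hamiltonian I W = (\<lambda>i j. if i \<in> I \<and> j \<in> I then (\<Sum>a\<in>Z. (- \<i> * Ln a) * Fm a i j) else 0)"
proof -
  let ?H = "\<lambda>i j. if i \<in> I \<and> j \<in> I then (\<Sum>a\<in>Z. (- \<i> * Ln a) * Fm a i j) else 0"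
  have sZ: "(\<Sum>a\<in>S0. f a * Fm a i j) = (\<Sum>a\<in>Z. f a * Fm a i j)" if "i \<in> I" "j \<in> I" for f i j
    using that finZ by (intro sum.mono_neutral_left) (auto simp: S0_def)
  have H0: "?H = (\<lambda>i j. if i \<in> I \<and> j \<in> I then (\<Sum>a\<in>S0. (- \<i> * Ln a) * Fm a i j) else 0)"
  proof (intro ext)
    fix i j
    show "?H i j = (if i \<in> I \<and> j \<in> I then (\<Sum>a\<in>S0. (- \<i> * Ln a) * Fm a i j) else 0)"
      using sZ[of i j "\<lambda>a. - \<i> * Ln a"] by auto
  qed
  show ?thesis
    unfolding principal_hamiltonian_def
  proof (rule the_equality)
    show "\<exists>S F. spectral_decomposition I W S F \<and>
      ?H = (\<lambda>i j. if i \<in> I \<and> j \<in> I then \<Sum>a\<in>S. - \<i> * Ln a * F a i j else 0)"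
      using sd_exists H0 by blast
  next
    fix H assume "\<exists>S F. spectral_decomposition I W S F \<and>
      H = (\<lambda>i j. if i \<in> I \<and> j \<in> I then \<Sum>a\<in>S. - \<i> * Ln a * F a i j else 0)"
    then obtain S F where sd: "spectral_decomposition I W S F"
      and H: "H = (\<lambda>i j. if i \<in> I \<and> j \<in> I then \<Sum>a\<in>S. - \<i> * Ln a * F a i j else 0)" by blast
    have SS: "S = S0" using sd_unique(1)[OF fin sd sd_exists] .
    have FF: "F a i j = Fm a i j" if "a \<in> S" "i \<in> I" "j \<in> I" for a i j
      using sd_unique(2)[OF fin sd sd_exists that] .
    show "H = ?H" unfolding H0 H SS
      by (intro ext) (auto intro!: sum.cong simp: FF SS)
  qed
qed

end


section \<open>Periodicity of injective self-maps\<close>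

lemma funpow_in: "f ` A \<subseteq> A \<Longrightarrow> a \<in> A \<Longrightarrow> (f ^^ n) a \<in> A"
  by (induction n) auto

lemma funpow_inj:
  assumes "f ` A \<subseteq> A" "inj_on f A" "x \<in> A" "y \<in> A" "(f ^^ n) x = (f ^^ n) y"
  shows "x = y"
  using assms(5)
proof (induction n)
  case 0 then show ?case by simp
next
  case (Suc n)
  have "f ((f ^^ n) x) = f ((f ^^ n) y)" using Suc.prems by simp
  then have "(f ^^ n) x = (f ^^ n) y"
    using inj_onD[OF assms(2)] funpow_in[OF assms(1) assms(3)] funpow_in[OF assms(1) assms(4)] by blast
  then show ?case by (rule Suc.IH)
qed

lemma funpow_mult_period: "(f ^^ p) a = a \<Longrightarrow> (f ^^ (k * p)) a = a"
  by (induction k) (simp_all add: funpow_add)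

lemma elem_period:
  assumes "finite A" "f ` A \<subseteq> A" "inj_on f A" "a \<in> A"
  shows "\<exists>p>0. (f ^^ p) a = a"
proof -
  let ?g = "\<lambda>n. (f ^^ n) a"
  have "?g ` {..card A} \<subseteq> A" using funpow_in[OF assms(2,4)] by auto
  then have "card (?g ` {..card A}) \<le> card A" by (rule card_mono[OF assms(1)])
  then have "\<not> inj_on ?g {..card A}" by (intro pigeonhole) simp
  then obtain i j where ij: "i \<noteq> j" "?g i = ?g j" by (auto simp: inj_on_def)
  have "\<exists>i j. i < j \<and> ?g i = ?g j"
    using ij by (metis linorder_neqE_nat)
  then obtain i j where ij: "i < j" "?g i = ?g j" by blast
  have "j = i + (j - i)" using ij(1) by simp
  then have "(f ^^ i) ((f ^^ (j - i)) a) = (f ^^ j) a"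
    by (metis funpow_add comp_apply)
  then have "(f ^^ i) ((f ^^ (j - i)) a) = (f ^^ i) a" using ij(2) by simp
  then have "(f ^^ (j - i)) a = a"
    by (rule funpow_inj[OF assms(2,3) funpow_in[OF assms(2,4)] assms(4)])
  then show ?thesis using ij(1) by (intro exI[of _ "j - i"]) simp
qed

lemma common_period:
  assumes "finite A" "f ` A \<subseteq> A" "inj_on f A"
  shows "\<exists>N>0. \<forall>a\<in>A. (f ^^ N) a = a"
proof -
  obtain p where p: "\<And>a. a \<in> A \<Longrightarrow> p a > 0 \<and> (f ^^ p a) a = a"
    using elem_period[OF assms] by metis
  define N where "N = (\<Prod>a\<in>A. p a)"
  have "N > 0" using p unfolding N_def by (intro prod_pos) blast
  moreover have "(f ^^ N) a = a" if "a \<in> A" for a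
  proof -
    have "p a dvd N" using that assms(1) by (simp add: N_def dvd_prodI)
    then obtain k where "N = p a * k" by (rule dvdE)
    then have "N = k * p a" by (simp add: mult.commute)
    then show ?thesis using funpow_mult_period[where f=f and p="p a" and a=a and k=k] p[OF that] by simp
  qed
  ultimately show ?thesis by blast
qed

lemma orbit_sub: "f ` A \<subseteq> A \<Longrightarrow> a \<in> A \<Longrightarrow> facial_orbit f a \<subseteq> A"
  unfolding facial_orbit_def using funpow_in[of f A a] by blast

lemma orbit_self: "a \<in> facial_orbit f a"
  unfolding facial_orbit_def by (auto intro: exI[of _ 0])

lemma orbit_eq:
  assumes N: "N > 0" "\<forall>a\<in>A. (f ^^ N) a = a" and A: "a \<in> A" and b: "b \<in> facial_orbit f a"
  shows "facial_orbit f b = facial_orbit f a"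
proof -
  from b obtain k where k: "b = (f ^^ k) a" by (auto simp: facial_orbit_def)
  define m where "m = N * (k+1) - k"
  have "k \<le> N * (k+1)" using N(1) by (metis Suc_eq_plus1 le_add2 le_trans mult_le_mono1 mult_Suc One_nat_def Suc_leI mult_1 mult.commute)
  then have mk: "m + k = (k+1) * N" by (simp add: m_def mult.commute)
  have "(f ^^ m) b = (f ^^ (m + k)) a" by (simp add: k funpow_add)
  also have "\<dots> = a" unfolding mk by (rule funpow_mult_period) (use N A in auto)
  finally have mb: "(f ^^ m) b = a" .
  show ?thesis
  proof
    show "facial_orbit f b \<subseteq> facial_orbit f a"
    proof
      fix x assume "x \<in> facial_orbit f b"
      then obtain n where "x = (f ^^ n) b" by (auto simp: facial_orbit_def)
      then have "x = (f ^^ (n + k)) a" by (simp add: k funpow_add)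
      then show "x \<in> facial_orbit f a" by (auto simp: facial_orbit_def)
    qed
    show "facial_orbit f a \<subseteq> facial_orbit f b"
    proof
      fix x assume "x \<in> facial_orbit f a"
      then obtain n where "x = (f ^^ n) a" by (auto simp: facial_orbit_def)
      then have "x = (f ^^ (n + m)) b" by (simp add: mb[symmetric] funpow_add)
      then show "x \<in> facial_orbit f b" by (auto simp: facial_orbit_def)
    qed
  qed
qed

lemma card_mod_class:
  fixes p k m :: nat
  assumes "0 < p" "k < p"
  shows "card {n\<in>{..<m*p}. n mod p = k} = m"
proof -
  have sub1: "{n\<in>{..<m*p}. n mod p = k} \<subseteq> (\<lambda>i. i * p + k) ` {..<m}"
  proof
    fix n assume "n \<in> {n\<in>{..<m*p}. n mod p = k}"
    then have n: "n < m * p" "n mod p = k" by auto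
    have "n = (n div p) * p + k" using n(2) by (metis div_mult_mod_eq)
    moreover have "n div p < m" using n(1) assms(1) by (simp add: div_less_iff_less_mult)
    ultimately show "n \<in> (\<lambda>i. i * p + k) ` {..<m}" by (auto intro: image_eqI)
  qed
  have sub2: "(\<lambda>i. i * p + k) ` {..<m} \<subseteq> {n\<in>{..<m*p}. n mod p = k}"
  proof
    fix n assume "n \<in> (\<lambda>i. i * p + k) ` {..<m}"
    then obtain i where i: "i < m" "n = i * p + k" by auto
    have "Suc i * p \<le> m * p" using i(1) by (intro mult_le_mono1) simp
    then have "i * p + k < m * p" using assms(2) by simp
    then show "n \<in> {n\<in>{..<m*p}. n mod p = k}" using i assms by simp
  qed
  have "{n\<in>{..<m*p}. n mod p = k} = (\<lambda>i. i * p + k) ` {..<m}" using sub1 sub2 by (rule equalityI)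
  moreover have "inj_on (\<lambda>i. i * p + k) {..<m}" using assms(1) by (auto simp: inj_on_def)
  ultimately show ?thesis by (simp add: card_image)
qed

lemma orbit_avg:
  assumes fA: "f ` A \<subseteq> A" and inj: "inj_on f A"
    and N: "N > 0" "\<forall>a\<in>A. (f ^^ N) a = a" and a: "a \<in> A"
  shows "card {n\<in>{..<N}. (f ^^ n) a = b} * card (facial_orbit f a) = (if b \<in> facial_orbit f a then N else 0)"
proof -
  define p where "p = (LEAST k. 0 < k \<and> (f ^^ k) a = a)"
  have pex: "0 < N \<and> (f ^^ N) a = a" using N a by auto
  have p: "0 < p \<and> (f ^^ p) a = a" unfolding p_def by (rule LeastI[of _ N]) (rule pex)
  have pmin: "\<not> (0 < k \<and> (f ^^ k) a = a)" if "k < p" for k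
    using not_less_Least[of k "\<lambda>k. 0 < k \<and> (f ^^ k) a = a"] that unfolding p_def by blast
  have modp: "(f ^^ n) a = (f ^^ (n mod p)) a" for n
  proof -
    have "(f ^^ n) a = (f ^^ (n mod p + n div p * p)) a" by (simp add: mod_div_mult_eq)
    also have "\<dots> = (f ^^ (n mod p)) ((f ^^ (n div p * p)) a)" by (simp only: funpow_add comp_apply)
    also have "(f ^^ (n div p * p)) a = a" by (rule funpow_mult_period) (use p in auto)
    finally show ?thesis .
  qed
  have aux: "(f ^^ i) a \<noteq> (f ^^ j) a" if "i < j" "j < p" for i j
  proof
    assume eq: "(f ^^ i) a = (f ^^ j) a"
    have "j = i + (j - i)" using that(1) by simp
    then have "(f ^^ i) ((f ^^ (j - i)) a) = (f ^^ j) a"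
      by (metis funpow_add comp_apply)
    then have "(f ^^ i) ((f ^^ (j - i)) a) = (f ^^ i) a" using eq by simp
    then have "(f ^^ (j - i)) a = a"
      by (rule funpow_inj[OF fA inj funpow_in[OF fA a] a])
    moreover have "0 < j - i" "j - i < p" using that by auto
    ultimately show False using pmin[of "j - i"] by blast
  qed
  have injp: "i = j" if "i < p" "j < p" "(f ^^ i) a = (f ^^ j) a" for i j
    using aux[of i j] aux[of j i] that by (metis linorder_neqE_nat)
  have orb: "facial_orbit f a = (\<lambda>n. (f ^^ n) a) ` {..<p}"
  proof
    show "facial_orbit f a \<subseteq> (\<lambda>n. (f ^^ n) a) ` {..<p}"
    proof
      fix x assume "x \<in> facial_orbit f a"
      then obtain n where "x = (f ^^ n) a" by (auto simp: facial_orbit_def)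
      then have "x = (f ^^ (n mod p)) a" by (simp add: modp[of n])
      moreover have "n mod p < p" using p by simp
      ultimately show "x \<in> (\<lambda>n. (f ^^ n) a) ` {..<p}" by blast
    qed
    show "(\<lambda>n. (f ^^ n) a) ` {..<p} \<subseteq> facial_orbit f a" by (auto simp: facial_orbit_def)
  qed
  have cardorb: "card (facial_orbit f a) = p"
    unfolding orb by (subst card_image) (auto intro: inj_onI injp)
  have "N mod p = 0"
  proof (rule ccontr)
    assume "N mod p \<noteq> 0"
    moreover have "(f ^^ (N mod p)) a = a" using trans[OF modp[of N, symmetric] conjunct2[OF pex]] .
    moreover have "N mod p < p" using p by simp
    ultimately show False using pmin[of "N mod p"] by auto
  qed
  then have Np: "N = (N div p) * p" using div_mult_mod_eq[of N p] by simp
  show ?thesis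
  proof (cases "b \<in> facial_orbit f a")
    case True
    then obtain k where k0: "k \<in> {..<p}" "b = (f ^^ k) a" unfolding orb by (rule imageE)
    have k: "k < p" "b = (f ^^ k) a" using k0 by (simp only: lessThan_iff)+
    have "{n\<in>{..<N}. (f ^^ n) a = b} = {n\<in>{..<(N div p) * p}. n mod p = k}"
    proof (intro Set.set_eqI)
      fix n
      have mp: "n mod p < p" using p by simp
      have "((f ^^ n) a = b) \<longleftrightarrow> n mod p = k"
      proof
        assume "(f ^^ n) a = b"
        then have "(f ^^ (n mod p)) a = (f ^^ k) a" using modp[of n] k(2) by simp
        then show "n mod p = k" using injp[OF mp k(1)] by blast
      next
        assume "n mod p = k"
        then show "(f ^^ n) a = b" using modp[of n] k(2) by simp
      qed
      then show "n \<in> {n\<in>{..<N}. (f ^^ n) a = b} \<longleftrightarrow> n \<in> {n\<in>{..<(N div p) * p}. n mod p = k}"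
        using Np[symmetric] by auto
    qed
    then have "card {n\<in>{..<N}. (f ^^ n) a = b} = N div p"
      using card_mod_class[of p k "N div p"] p k by simp
    then show ?thesis using True cardorb Np[symmetric] by simp
  next
    case False
    have "{n\<in>{..<N}. (f ^^ n) a = b} = {}" using False by (auto simp: facial_orbit_def)
    then show ?thesis using False by simp
  qed
qed

section \<open>Class matrices\<close>

definition clsmat :: "'a set \<Rightarrow> ('a \<Rightarrow> 'a set) \<Rightarrow> 'a \<Rightarrow> 'a \<Rightarrow> complex" where
  "clsmat A cls = (\<lambda>a b. if a \<in> A \<and> b \<in> A \<and> b \<in> cls a then 1 / of_nat (card (cls a)) else 0)"

definition cls_ok :: "'a set \<Rightarrow> ('a \<Rightarrow> 'a set) \<Rightarrow> bool" where
  "cls_ok A cls \<longleftrightarrow> finite A \<and> (\<forall>a\<in>A. a \<in> cls a \<and> cls a \<subseteq> A \<and> (\<forall>b\<in>cls a. cls b = cls a))"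

lemma clsmat_idem:
  assumes ok: "cls_ok A cls"
  shows "mmult A A A (clsmat A cls) (clsmat A cls) = clsmat A cls"
proof (intro ext)
  fix a b
  show "mmult A A A (clsmat A cls) (clsmat A cls) a b = clsmat A cls a b"
  proof (cases "a \<in> A \<and> b \<in> A")
    case True
    have fA: "finite A" and sub: "cls a \<subseteq> A" and aa: "a \<in> cls a"
      and eqc: "\<And>c. c \<in> cls a \<Longrightarrow> cls c = cls a"
      using ok True unfolding cls_ok_def by auto
    have fc: "finite (cls a)" using finite_subset[OF sub fA] .
    have cpos: "card (cls a) > 0" using fc aa by (auto simp: card_gt_0_iff)
    let ?x = "clsmat A cls a b / of_nat (card (cls a))"
    have "(\<Sum>c\<in>A. clsmat A cls a c * clsmat A cls c b) = (\<Sum>c\<in>A. if c \<in> cls a then ?x else 0)"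
    proof (intro sum.cong refl)
      fix c assume c: "c \<in> A"
      show "clsmat A cls a c * clsmat A cls c b = (if c \<in> cls a then ?x else 0)"
        using c True eqc[of c] by (auto simp: clsmat_def)
    qed
    also have "\<dots> = (\<Sum>c\<in>{c\<in>A. c \<in> cls a}. ?x)" by (simp only: sum.inter_filter[OF fA])
    also have "{c\<in>A. c \<in> cls a} = cls a" using sub by auto
    also have "(\<Sum>c\<in>cls a. ?x) = clsmat A cls a b" using cpos by simp
    finally show ?thesis using True by (simp add: mmult_def)
  qed (auto simp: mmult_def clsmat_def)
qed

lemma clsmat_herm:
  assumes ok: "cls_ok A cls"
  shows "clsmat A cls a b = cnj (clsmat A cls b a)"
proof (cases "a \<in> A \<and> b \<in> A")
  case True
  have eq: "b \<in> cls a \<longleftrightarrow> a \<in> cls b" and ce: "b \<in> cls a \<Longrightarrow> cls b = cls a"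
    using ok True unfolding cls_ok_def by metis+
  show ?thesis using True eq ce by (auto simp: clsmat_def)
qed (auto simp: clsmat_def)

definition refl_of :: "'a set \<Rightarrow> ('a \<Rightarrow> 'a \<Rightarrow> complex) \<Rightarrow> 'a \<Rightarrow> 'a \<Rightarrow> complex" where
  "refl_of A P = (\<lambda>i j. 2 * P i j - idm A i j)"

lemma sum_idm_right: "finite A \<Longrightarrow> j \<in> A \<Longrightarrow> (\<Sum>k\<in>A. f k * idm A k j) = f j"
  by (simp add: idm_def if_distrib[of "\<lambda>x. _ * x"] sum.delta' cong: if_cong)

lemma sum_idm_left: "finite A \<Longrightarrow> i \<in> A \<Longrightarrow> (\<Sum>k\<in>A. idm A i k * f k) = f i"
  by (simp add: idm_def if_distrib[of "\<lambda>x. x * _"] sum.delta cong: if_cong)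

lemma refl_inv:
  assumes fA: "finite A" and P: "mat_eq_on A A (mmult A A A P P) P"
  shows "mat_eq_on A A (mmult A A A (refl_of A P) (refl_of A P)) (idm A)"
proof (unfold mat_eq_on_def, intro ballI)
  fix i j assume ij: "i \<in> A" "j \<in> A"
  have PP: "(\<Sum>k\<in>A. P i k * P k j) = P i j" using P ij by (simp add: mat_eq_on_def mmult_def)
  have "(\<Sum>k\<in>A. (2 * P i k - idm A i k) * (2 * P k j - idm A k j)) =
        (\<Sum>k\<in>A. 4 * (P i k * P k j) - 2 * (P i k * idm A k j) - 2 * (idm A i k * P k j) + idm A i k * idm A k j)"
    by (intro sum.cong refl) (simp add: algebra_simps)
  also have "\<dots> = 4 * (\<Sum>k\<in>A. P i k * P k j) - 2 * (\<Sum>k\<in>A. P i k * idm A k j) - 2 * (\<Sum>k\<in>A. idm A i k * P k j) + (\<Sum>k\<in>A. idm A i k * idm A k j)"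
    by (simp add: sum.distrib sum_subtractf sum_distrib_left)
  also have "\<dots> = idm A i j"
    using ij fA by (simp add: PP sum_idm_right sum_idm_left)
  finally show "mmult A A A (refl_of A P) (refl_of A P) i j = idm A i j"
    using ij by (simp add: mmult_def refl_of_def)
qed

lemma refl_herm:
  assumes "\<And>i j. i \<in> A \<Longrightarrow> j \<in> A \<Longrightarrow> P i j = cnj (P j i)" "i \<in> A" "j \<in> A"
  shows "refl_of A P i j = cnj (refl_of A P j i)"
proof -
  have "P i j = cnj (P j i)" using assms by blast
  then show ?thesis using assms(2,3) by (simp add: refl_of_def idm_def)
qed

lemma adj_mmult:
  assumes "\<And>i j. i \<in> A \<Longrightarrow> j \<in> A \<Longrightarrow> Ba i j = cnj (B j i)"
    "\<And>i j. i \<in> A \<Longrightarrow> j \<in> A \<Longrightarrow> Ca i j = cnj (C j i)" "i \<in> A" "j \<in> A"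
  shows "mmult A A A Ca Ba i j = cnj (mmult A A A B C j i)"
proof -
  have "mmult A A A Ca Ba i j = (\<Sum>k\<in>A. cnj (B j k * C k i))"
    using assms by (simp add: mmult_def mult.commute cong: sum.cong)
  then show ?thesis using assms by (simp add: mmult_def cnj_sum)
qed

lemma idm_left_eq: "finite A \<Longrightarrow> mat_eq_on A A (mmult A A A (idm A) V) V"
  by (simp add: mat_eq_on_def mmult_idm_left)

lemma mid_cancel:
  assumes fA: "finite A" and XY: "mat_eq_on A A (mmult A A A X Y) (idm A)"
  shows "mmult A A A (mmult A A A Z X) (mmult A A A Y V) = mmult A A A Z V"
proof -
  have "mmult A A A (mmult A A A Z X) (mmult A A A Y V) = mmult A A A Z (mmult A A A (mmult A A A X Y) V)"
    by (simp add: mmult_assoc)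
  also have "mmult A A A (mmult A A A X Y) V = mmult A A A (idm A) V"
    by (rule mmult_cong[OF XY]) (simp add: mat_eq_on_def)
  also have "mmult A A A Z (mmult A A A (idm A) V) = mmult A A A Z V"
    by (rule mmult_cong[OF _ idm_left_eq[OF fA]]) (simp add: mat_eq_on_def)
  finally show ?thesis .
qed

lemma unit_from_refl:
  assumes fA: "finite A"
    and K1: "mat_eq_on A A (mmult A A A K1 K1) (idm A)" "\<And>i j. i \<in> A \<Longrightarrow> j \<in> A \<Longrightarrow> K1 i j = cnj (K1 j i)"
    and K2: "mat_eq_on A A (mmult A A A K2 K2) (idm A)" "\<And>i j. i \<in> A \<Longrightarrow> j \<in> A \<Longrightarrow> K2 i j = cnj (K2 j i)"
  defines "U \<equiv> mmult A A A K1 K2" and "Ua \<equiv> mmult A A A K2 K1"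
  shows "unit_op A (mmult A A A U U) (mmult A A A Ua Ua)"
proof -
  have adjU: "Ua i j = cnj (U j i)" if "i \<in> A" "j \<in> A" for i j
    unfolding U_def Ua_def by (rule adj_mmult[OF K1(2) K2(2) that])
  have UaU: "mat_eq_on A A (mmult A A A Ua U) (idm A)"
    unfolding U_def Ua_def mid_cancel[OF fA K1(1)] by (rule K2(1))
  have UUa: "mat_eq_on A A (mmult A A A U Ua) (idm A)"
    unfolding U_def Ua_def mid_cancel[OF fA K2(1)] by (rule K1(1))
  show ?thesis
  proof
    show "finite A" by (rule fA)
    show "\<And>i j. i \<in> A \<Longrightarrow> j \<in> A \<Longrightarrow> mmult A A A Ua Ua i j = cnj (mmult A A A U U j i)"
      by (rule adj_mmult[OF adjU adjU])
    show "mat_eq_on A A (mmult A A A (mmult A A A Ua Ua) (mmult A A A U U)) (idm A)"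
      unfolding mid_cancel[OF fA UaU] by (rule UaU)
    show "mat_eq_on A A (mmult A A A (mmult A A A U U) (mmult A A A Ua Ua)) (idm A)"
      unfolding mid_cancel[OF fA UUa] by (rule UUa)
  qed
qed

section \<open>Covers\<close>

locale cover =
  fixes AX :: "'x set" and AY :: "'y set" and p :: "'y \<Rightarrow> 'x" and r :: nat
  assumes finX: "finite AX" and finY: "finite AY"
    and pmap: "\<And>b. b \<in> AY \<Longrightarrow> p b \<in> AX"
    and fib: "\<And>a. a \<in> AX \<Longrightarrow> card {b\<in>AY. p b = a} = r"
    and rpos: "r > 0"
begin

definition L :: "'y \<Rightarrow> 'x \<Rightarrow> complex" where
  "L = norm_char_matrix AY AX (\<lambda>a. {b\<in>AY. p b = a})"

abbreviation "lc \<equiv> complex_of_real (1 / sqrt (real r))"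

lemma L_eq: "L b a = (if b \<in> AY \<and> a \<in> AX \<and> p b = a then lc else 0)"
  by (auto simp: L_def norm_char_matrix_def fib)

lemma LtL: "mat_eq_on AX AX (mmult AX AY AX (mtrans L) L) (idm AX)"
proof (unfold mat_eq_on_def, intro ballI)
  fix a a' assume aa: "a \<in> AX" "a' \<in> AX"
  have "(\<Sum>b\<in>AY. L b a * L b a') = (\<Sum>b\<in>AY. if p b = a then (if a = a' then lc * lc else 0) else 0)"
    using aa by (intro sum.cong refl) (auto simp: L_eq)
  also have "\<dots> = (\<Sum>b\<in>{b\<in>AY. p b = a}. (if a = a' then lc * lc else 0))"
    by (simp only: sum.inter_filter[OF finY])
  also have "\<dots> = of_nat r * (if a = a' then lc * lc else 0)" by (simp only: sum_constant fib[OF aa(1)])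
  also have "\<dots> = idm AX a a'"
  proof -
    have h: "(1 / sqrt (real r)) * (1 / sqrt (real r)) = 1 / real r"
      by (simp add: power2_eq_square[symmetric] power_divide)
    have "lc * lc = complex_of_real (1 / real r)" by (simp only: of_real_mult[symmetric] h)
    then have "of_nat r * (lc * lc) = (1::complex)"
      using rpos by (simp add: field_simps)
    then show ?thesis using aa by (simp add: idm_def)
  qed
  finally show "mmult AX AY AX (mtrans L) L a a' = idm AX a a'"
    using aa by (simp add: mmult_def mtrans_def)
qed

lemma inter:
  assumes H: "\<And>b a. b \<in> AY \<Longrightarrow> a \<in> AX \<Longrightarrow> (\<Sum>b'\<in>{b'\<in>AY. p b' = a}. CY b b') = CX (p b) a"
  shows "mmult AY AY AX CY L = mmult AY AX AX L CX"
proof (intro ext)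
  fix b a
  show "mmult AY AY AX CY L b a = mmult AY AX AX L CX b a"
  proof (cases "b \<in> AY \<and> a \<in> AX")
    case True
    have "(\<Sum>b'\<in>AY. CY b b' * L b' a) = (\<Sum>b'\<in>AY. if p b' = a then lc * CY b b' else 0)"
      using True by (intro sum.cong refl) (auto simp: L_eq)
    also have "\<dots> = (\<Sum>b'\<in>{b'\<in>AY. p b' = a}. lc * CY b b')"
      by (simp only: sum.inter_filter[OF finY])
    also have "\<dots> = lc * (\<Sum>b'\<in>{b'\<in>AY. p b' = a}. CY b b')"
      by (simp only: sum_distrib_left)
    also have "\<dots> = lc * CX (p b) a" using H True by simp
    also have "\<dots> = (\<Sum>a'\<in>AX. L b a' * CX a' a)"
    proof -
      have "(\<Sum>a'\<in>AX. L b a' * CX a' a) = (\<Sum>a'\<in>AX. if p b = a' then lc * CX a' a else 0)"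
        using True by (intro sum.cong refl) (auto simp: L_eq)
      also have "\<dots> = lc * CX (p b) a" using finX pmap True by simp
      finally show ?thesis by simp
    qed
    finally show ?thesis using True by (simp add: mmult_def)
  qed (auto simp: mmult_def)
qed

lemma inter_refl:
  assumes "mmult AY AY AX CY L = mmult AY AX AX L CX"
  shows "mmult AY AY AX (refl_of AY CY) L = mmult AY AX AX L (refl_of AX CX)"
proof (intro ext)
  fix b a
  show "mmult AY AY AX (refl_of AY CY) L b a = mmult AY AX AX L (refl_of AX CX) b a"
  proof (cases "b \<in> AY \<and> a \<in> AX")
    case True
    have e: "(\<Sum>b'\<in>AY. CY b b' * L b' a) = (\<Sum>a'\<in>AX. L b a' * CX a' a)"
      using fun_cong[OF fun_cong[OF assms, of b], of a] True by (simp add: mmult_def)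
    have "(\<Sum>b'\<in>AY. (2 * CY b b' - idm AY b b') * L b' a) = 2 * (\<Sum>b'\<in>AY. CY b b' * L b' a) - (\<Sum>b'\<in>AY. idm AY b b' * L b' a)"
      by (simp add: algebra_simps sum_subtractf sum_distrib_left)
    also have "(\<Sum>b'\<in>AY. idm AY b b' * L b' a) = L b a" using True finY by (simp add: sum_idm_left)
    also have "(\<Sum>a'\<in>AX. L b a' * (2 * CX a' a - idm AX a' a)) = 2 * (\<Sum>a'\<in>AX. L b a' * CX a' a) - (\<Sum>a'\<in>AX. L b a' * idm AX a' a)"
      by (simp add: algebra_simps sum_subtractf sum_distrib_left)
    moreover have "(\<Sum>a'\<in>AX. L b a' * idm AX a' a) = L b a" using True finX by (simp add: sum_idm_right)
    ultimately show ?thesis using True e by (simp add: mmult_def refl_of_def)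
  qed (auto simp: mmult_def)
qed

lemma inter_mult:
  assumes "mmult AY AY AX B1 L = mmult AY AX AX L A1" "mmult AY AY AX B2 L = mmult AY AX AX L A2"
  shows "mmult AY AY AX (mmult AY AY AY B1 B2) L = mmult AY AX AX L (mmult AX AX AX A1 A2)"
proof -
  have "mmult AY AY AX (mmult AY AY AY B1 B2) L = mmult AY AY AX B1 (mmult AY AY AX B2 L)"
    by (rule mmult_assoc)
  also have "\<dots> = mmult AY AY AX B1 (mmult AY AX AX L A2)" by (simp only: assms(2))
  also have "\<dots> = mmult AY AX AX (mmult AY AY AX B1 L) A2" by (rule mmult_assoc[symmetric])
  also have "\<dots> = mmult AY AX AX (mmult AY AX AX L A1) A2" by (simp only: assms(1))
  also have "\<dots> = mmult AY AX AX L (mmult AX AX AX A1 A2)" by (rule mmult_assoc)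
  finally show ?thesis .
qed

lemma inter_pact:
  assumes WL: "mmult AY AY AX WY L = mmult AY AX AX L WX"
  shows "pact AY WY q (ap AY AX L v) = ap AY AX L (pact AX WX q v)"
proof (induction q arbitrary: v)
  case 0 then show ?case by simp
next
  case (pCons c q)
  have T: "ap AY AY WY (ap AY AX L x) = ap AY AX L (ap AX AX WX x)" for x
    by (simp add: ap_mmult[symmetric] WL)
  have "pact AY WY (pCons c q) (ap AY AX L v) = (\<lambda>i. c * ap AY AX L v i + ap AY AY WY (ap AY AX L (pact AX WX q v)) i)"
    by (simp add: pact_pCons pCons.IH)
  also have "\<dots> = (\<lambda>i. c * ap AY AX L v i + ap AY AX L (ap AX AX WX (pact AX WX q v)) i)"
    by (simp add: T)
  also have "\<dots> = ap AY AX L (pact AX WX (pCons c q) v)"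
    by (simp add: pact_pCons ap_add ap_scale)
  finally show ?case .
qed

end


lemma sqrt_sq_c:
  "complex_of_real (1 / sqrt (real n)) * complex_of_real (1 / sqrt (real n)) = 1 / of_nat n"
proof -
  have h: "(1 / sqrt (real n)) * (1 / sqrt (real n)) = 1 / real n"
    by (simp add: power2_eq_square[symmetric] power_divide)
  have "complex_of_real (1 / sqrt (real n)) * complex_of_real (1 / sqrt (real n)) = complex_of_real (1 / real n)"
    by (simp only: of_real_mult[symmetric] h)
  then show ?thesis by simp
qed

lemma Pmat:
  assumes fin: "finite (arcs V E)" and sA: "\<sigma> ` arcs V E \<subseteq> arcs V E" and inj: "inj_on \<sigma> (arcs V E)"
  shows "mmult (arcs V E) (faces V E \<sigma>) (arcs V E) (Mhat V E \<sigma>) (mtrans (Mhat V E \<sigma>))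
         = clsmat (arcs V E) (facial_orbit \<sigma>)"
proof -
  let ?A = "arcs V E"
  obtain N where N: "N > 0" "\<forall>a\<in>?A. (\<sigma> ^^ N) a = a" using common_period[OF fin sA inj] by blast
  have fe: "F = facial_orbit \<sigma> a" if F: "F \<in> faces V E \<sigma>" and a: "a \<in> ?A" "a \<in> F" for F a
  proof -
    from F obtain c where c: "c \<in> ?A" "F = facial_orbit \<sigma> c" by (auto simp: faces_def)
    then show ?thesis using orbit_eq[OF N c(1)] a(2) by simp
  qed
  show ?thesis
  proof (intro ext)
    fix a b
    show "mmult ?A (faces V E \<sigma>) ?A (Mhat V E \<sigma>) (mtrans (Mhat V E \<sigma>)) a b = clsmat ?A (facial_orbit \<sigma>) a b"
    proof (cases "a \<in> ?A \<and> b \<in> ?A")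
      case True
      let ?O = "facial_orbit \<sigma> a"
      let ?c = "complex_of_real (1 / sqrt (real (card ?O)))"
      have sub: "?O \<subseteq> ?A" by (rule orbit_sub[OF sA]) (use True in simp)
      have OA: "{x \<in> ?A. x \<in> ?O} = ?O" using sub by auto
      have fO: "finite ?O" using finite_subset[OF sub fin] .
      have cO: "card ?O > 0" using fO orbit_self[of a \<sigma>] by (auto simp: card_gt_0_iff)
      have Of: "?O \<in> faces V E \<sigma>" using True by (simp add: faces_def)
      have ffin: "finite (faces V E \<sigma>)" using fin by (simp add: faces_def)
      have "(\<Sum>F\<in>faces V E \<sigma>. Mhat V E \<sigma> a F * mtrans (Mhat V E \<sigma>) F b)
          = (\<Sum>F\<in>faces V E \<sigma>. if F = ?O then (if b \<in> ?O then ?c * ?c else 0) else 0)"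
      proof (intro sum.cong refl)
        fix F assume F: "F \<in> faces V E \<sigma>"
        show "Mhat V E \<sigma> a F * mtrans (Mhat V E \<sigma>) F b = (if F = ?O then (if b \<in> ?O then ?c * ?c else 0) else 0)"
        proof (cases "a \<in> F")
          case True2: True
          then have FO: "F = ?O" using fe[OF F] True by blast
          show ?thesis using True True2 F FO OA by (simp add: Mhat_def mtrans_def)
        next
          case False
          then have "F \<noteq> ?O" using orbit_self[of a \<sigma>] by blast
          then show ?thesis using False by (simp add: Mhat_def mtrans_def)
        qed
      qed
      also have "\<dots> = (if b \<in> ?O then ?c * ?c else 0)"
        using Of ffin by simp
      also have "\<dots> = (if b \<in> ?O then 1 / of_nat (card ?O) else 0)" by (simp only: sqrt_sq_c)
      also have "\<dots> = clsmat ?A (facial_orbit \<sigma>) a b"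
        using True by (simp add: clsmat_def)
      finally show ?thesis using True by (simp add: mmult_def)
    qed (auto simp: mmult_def clsmat_def)
  qed
qed

lemma arcs_sub: "arcs V E \<subseteq> V \<times> V"
  by (auto simp: arcs_def)

lemma Qmat:
  assumes finV: "finite V"
  shows "mmult (arcs V E) V (arcs V E) (Nhat V E) (mtrans (Nhat V E))
         = clsmat (arcs V E) (\<lambda>a. {c\<in>arcs V E. fst c = fst a})"
proof (intro ext)
  let ?A = "arcs V E"
  fix a b
  show "mmult ?A V ?A (Nhat V E) (mtrans (Nhat V E)) a b = clsmat ?A (\<lambda>a. {c\<in>?A. fst c = fst a}) a b"
  proof (cases "a \<in> ?A \<and> b \<in> ?A")
    case True
    let ?T = "{c\<in>?A. fst c = fst a}"
    let ?c = "complex_of_real (1 / sqrt (real (card ?T)))"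
    have aV: "fst a \<in> V" "fst b \<in> V" using True by (auto simp: arcs_def)
    have "(\<Sum>u\<in>V. Nhat V E a u * mtrans (Nhat V E) u b)
        = (\<Sum>u\<in>V. if u = fst a then (if fst b = fst a then ?c * ?c else 0) else 0)"
    proof (intro sum.cong refl)
      fix u assume u: "u \<in> V"
      show "Nhat V E a u * mtrans (Nhat V E) u b = (if u = fst a then (if fst b = fst a then ?c * ?c else 0) else 0)"
      proof (cases "u = fst a")
        case True2: True
        show ?thesis
        proof (cases "fst b = fst a")
          case True3: True
          have "{c\<in>?A. fst c = u} = ?T" using True2 by simp
          then show ?thesis using True True2 True3 u by (simp add: Nhat_def mtrans_def)
        next
          case False
          then show ?thesis using True2 by (simp add: Nhat_def mtrans_def)
        qed
      next
        case False
        then show ?thesis by (simp add: Nhat_def mtrans_def)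
      qed
    qed
    also have "\<dots> = (if fst b = fst a then ?c * ?c else 0)" using aV finV by simp
    also have "\<dots> = (if fst b = fst a then 1 / of_nat (card ?T) else 0)" by (simp only: sqrt_sq_c)
    also have "\<dots> = clsmat ?A (\<lambda>a. {c\<in>?A. fst c = fst a}) a b"
      using True by (simp add: clsmat_def)
    finally show ?thesis using True by (simp add: mmult_def)
  qed (auto simp: mmult_def clsmat_def)
qed

lemma cls_ok_orbit:
  assumes "finite A" "f ` A \<subseteq> A" "inj_on f A"
  shows "cls_ok A (facial_orbit f)"
proof -
  obtain N where N: "N > 0" "\<forall>a\<in>A. (f ^^ N) a = a" using common_period[OF assms] by blast
  have "\<forall>a\<in>A. a \<in> facial_orbit f a \<and> facial_orbit f a \<subseteq> A \<and>
           (\<forall>b\<in>facial_orbit f a. facial_orbit f b = facial_orbit f a)"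
  proof
    fix a assume a: "a \<in> A"
    have 1: "a \<in> facial_orbit f a" by (rule orbit_self)
    have 2: "facial_orbit f a \<subseteq> A" by (rule orbit_sub[OF assms(2) a])
    have 3: "\<forall>b\<in>facial_orbit f a. facial_orbit f b = facial_orbit f a"
      using orbit_eq[OF N a] by blast
    show "a \<in> facial_orbit f a \<and> facial_orbit f a \<subseteq> A \<and>
           (\<forall>b\<in>facial_orbit f a. facial_orbit f b = facial_orbit f a)" using 1 2 3 by blast
  qed
  then show ?thesis unfolding cls_ok_def using assms(1) by blast
qed

lemma cls_ok_tail: "finite A \<Longrightarrow> cls_ok A (\<lambda>a. {c\<in>A. fst c = fst (a::'a \<times> 'b)})"
  by (auto simp: cls_ok_def)

lemma clsmat_avg:
  assumes fin: "finite A" and fA: "f ` A \<subseteq> A" and inj: "inj_on f A"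
    and N: "N > 0" "\<forall>a\<in>A. (f ^^ N) a = a" and a: "a \<in> A" and b: "b \<in> A"
  shows "clsmat A (facial_orbit f) a b = of_nat (card {n\<in>{..<N}. (f ^^ n) a = b}) / of_nat N"
proof -
  let ?O = "facial_orbit f a"
  let ?S = "card {n\<in>{..<N}. (f ^^ n) a = b}"
  have key: "?S * card ?O = (if b \<in> ?O then N else 0)" by (rule orbit_avg[OF fA inj N a])
  have fO: "finite ?O" using finite_subset[OF orbit_sub[OF fA a] fin] .
  have cO: "card ?O > 0" using fO orbit_self[of a f] by (auto simp: card_gt_0_iff)
  show ?thesis
  proof (cases "b \<in> ?O")
    case True
    then have "of_nat ?S * of_nat (card ?O) = (of_nat N :: complex)"
      using key by (metis of_nat_mult)
    then show ?thesis using True a b cO N(1) by (simp add: clsmat_def field_simps)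
  next
    case False
    then have "?S = 0" using key cO by simp
    then show ?thesis using False by (simp add: clsmat_def)
  qed
qed

lemma sum_card_fiber:
  assumes "finite S" "finite B" "\<forall>n\<in>S. g n \<in> B"
  shows "(\<Sum>b\<in>{b\<in>B. h b = a}. card {n\<in>S. g n = b}) = card {n\<in>S. h (g n) = a}"
proof -
  have "{n\<in>S. h (g n) = a} = (\<Union>b\<in>{b\<in>B. h b = a}. {n\<in>S. g n = b})" using assms(3) by auto
  moreover have "card (\<Union>b\<in>{b\<in>B. h b = a}. {n\<in>S. g n = b}) = (\<Sum>b\<in>{b\<in>B. h b = a}. card {n\<in>S. g n = b})"
    using assms(1,2) by (intro card_UN_disjoint) auto
  ultimately show ?thesis by simp
qed


lemma refl_cls:
  assumes ok: "cls_ok A cls"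
  shows "mat_eq_on A A (mmult A A A (refl_of A (clsmat A cls)) (refl_of A (clsmat A cls))) (idm A)"
    "\<And>i j. i \<in> A \<Longrightarrow> j \<in> A \<Longrightarrow> refl_of A (clsmat A cls) i j = cnj (refl_of A (clsmat A cls) j i)"
proof -
  have fA: "finite A" using ok by (simp add: cls_ok_def)
  have "mat_eq_on A A (mmult A A A (clsmat A cls) (clsmat A cls)) (clsmat A cls)"
    by (simp add: clsmat_idem[OF ok] mat_eq_on_def)
  then show "mat_eq_on A A (mmult A A A (refl_of A (clsmat A cls)) (refl_of A (clsmat A cls))) (idm A)"
    by (rule refl_inv[OF fA])
  show "\<And>i j. i \<in> A \<Longrightarrow> j \<in> A \<Longrightarrow> refl_of A (clsmat A cls) i j = cnj (refl_of A (clsmat A cls) j i)"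
    by (rule refl_herm) (rule clsmat_herm[OF ok])
qed

lemma idm_left_full:
  assumes "finite A" "\<And>i j. i \<notin> A \<or> j \<notin> A \<Longrightarrow> M i j = 0"
  shows "mmult A A A (idm A) M = M"
proof (intro ext)
  fix i j show "mmult A A A (idm A) M i j = M i j"
  proof (cases "i \<in> A \<and> j \<in> A")
    case True then show ?thesis using mmult_idm_left[of j A i A M] assms(1) by simp
  next
    case False then show ?thesis using mmult_out[of i A j A A "idm A" M] assms(2)[of i j] by simp
  qed
qed

context spec_op begin
lemma ph_formula':
  "principal_hamiltonian I W =
    (\<lambda>i j. if i \<in> I \<and> j \<in> I then (\<Sum>a\<in>Z. (- \<i> * Ln a) * pact I W (lag Z a) (ev j) i) else 0)"
  by (simp only: ph_formula Fm_def)
end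

lemma ph_explicit:
  assumes "spec_op I W Wa Z"
  shows "principal_hamiltonian I W =
    (\<lambda>i j. if i \<in> I \<and> j \<in> I then (\<Sum>a\<in>Z. (- \<i> * Ln a) * pact I W (lag Z a) (ev j) i) else 0)"
  by (rule spec_op.ph_formula'[OF assms])

context cover begin

lemma LtL_ap: "supp AX x \<Longrightarrow> ap AX AY (mtrans L) (ap AY AX L x) = x"
  using ap_mmult[of AX AX AY "mtrans L" L x, symmetric] ap_cong[OF LtL, of x] ap_idm[OF finX, of x] by simp

lemma cancel:
  assumes "\<And>i j. i \<notin> AX \<or> j \<notin> AX \<Longrightarrow> M i j = 0"
  shows "mmult AX AY AX (mtrans L) (mmult AY AX AX L M) = M"
proof -
  have "mmult AX AY AX (mtrans L) (mmult AY AX AX L M) = mmult AX AX AX (mmult AX AY AX (mtrans L) L) M"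
    by (rule mmult_assoc[symmetric])
  also have "\<dots> = mmult AX AX AX (idm AX) M"
    by (rule mmult_cong[OF LtL]) (simp add: mat_eq_on_def)
  also have "\<dots> = M" by (rule idm_left_full[OF finX assms])
  finally show ?thesis .
qed

lemma Lcol: "a \<in> AX \<Longrightarrow> (\<lambda>x. \<Sum>b'\<in>AY. L b' a * ev b' x) = ap AY AX L (ev a)"
proof (intro ext)
  fix x assume a: "a \<in> AX"
  have "(\<Sum>b'\<in>AY. L b' a * ev b' x) = (\<Sum>b'\<in>AY. if x = b' then L x a else 0)"
    by (intro sum.cong refl) (simp add: ev_def)
  also have "\<dots> = (if x \<in> AY then L x a else 0)" using finY by simp
  also have "\<dots> = ap AY AX L (ev a) x" using finX a by (simp add: ap_ev)
  finally show "(\<Sum>b'\<in>AY. L b' a * ev b' x) = ap AY AX L (ev a) x" .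
qed

end

locale vsetting =
  fixes V :: "'v set" and E :: "'v \<Rightarrow> 'v \<Rightarrow> bool" and \<sigma> :: "'v \<times> 'v \<Rightarrow> 'v \<times> 'v"
    and G :: "'g monoid" and \<phi> :: "'v \<times> 'v \<Rightarrow> 'g"
  assumes sg: "simple_graph V E" and circ: "circular_embedding V E \<sigma>"
    and grp: "group G" and finG: "finite (carrier G)" and volt: "voltage_assignment G V E \<phi>"
begin

abbreviation "AX \<equiv> arcs V E"
abbreviation "VY \<equiv> voltage_vertices G V"
abbreviation "EY \<equiv> voltage_edges G E \<phi>"
abbreviation "AY \<equiv> arcs VY EY"
abbreviation "\<sigma>Y \<equiv> voltage_embedding G \<phi> \<sigma>"

definition lift :: "'g \<Rightarrow> 'v \<times> 'v \<Rightarrow> ('v \<times> 'g) \<times> ('v \<times> 'g)" where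
  "lift g a = ((fst a, g), (snd a, g \<otimes>\<^bsub>G\<^esub> \<phi> a))"

lemma finV: "finite V" using sg by (simp add: simple_graph_def)

lemma finAX: "finite AX"
  by (rule finite_subset[OF arcs_sub]) (simp add: finV)

lemma finVY: "finite VY"
  by (simp add: voltage_vertices_def finV finG)

lemma phiG: "a \<in> AX \<Longrightarrow> \<phi> a \<in> carrier G"
  using volt by (simp add: voltage_assignment_def)

lemma mclosed: "x \<in> carrier G \<Longrightarrow> y \<in> carrier G \<Longrightarrow> x \<otimes>\<^bsub>G\<^esub> y \<in> carrier G"
  by (rule monoid.m_closed[OF group.is_monoid[OF grp]])

lemma lift_in:
  assumes g: "g \<in> carrier G" and a: "a \<in> AX"
  shows "lift g a \<in> AY"
proof -
  obtain u v where uv: "a = (u, v)" by (cases a)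
  have "u \<in> V" "v \<in> V" "E u v" using a uv by (auto simp: arcs_def)
  moreover have "g \<otimes>\<^bsub>G\<^esub> \<phi> (u, v) \<in> carrier G" using mclosed[OF g phiG[OF a]] uv by simp
  ultimately show ?thesis using g uv
    by (simp add: lift_def arcs_def voltage_vertices_def voltage_edges_def)
qed

lemma AY_lift:
  assumes b: "b \<in> AY"
  shows "snd (fst b) \<in> carrier G \<and> cover_arc b \<in> AX \<and> b = lift (snd (fst b)) (cover_arc b)"
proof -
  obtain u g v h where bb: "b = ((u, g), (v, h))" by (metis prod.collapse)
  have m: "u \<in> V" "g \<in> carrier G" "v \<in> V" "h \<in> carrier G" "E u v" "h = g \<otimes>\<^bsub>G\<^esub> \<phi> (u, v)"
    using b bb by (auto simp: arcs_def voltage_vertices_def voltage_edges_def)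
  show ?thesis using m bb by (simp add: cover_arc_def lift_def arcs_def)
qed

lemma cover_lift[simp]: "cover_arc (lift g a) = a"
  by (simp add: cover_arc_def lift_def)

lemma fst_lift: "fst (lift g a) = (fst a, g)"
  by (simp add: lift_def)

lemma lift_inj: "lift g a = lift g' a' \<Longrightarrow> g = g' \<and> a = a'"
  by (simp add: lift_def prod_eq_iff)

lemma AY_image: "AY = (\<lambda>(g, a). lift g a) ` (carrier G \<times> AX)"
proof
  show "AY \<subseteq> (\<lambda>(g, a). lift g a) ` (carrier G \<times> AX)"
  proof
    fix b assume "b \<in> AY"
    then have "snd (fst b) \<in> carrier G" "cover_arc b \<in> AX" "b = lift (snd (fst b)) (cover_arc b)"
      using AY_lift by blast+
    then show "b \<in> (\<lambda>(g, a). lift g a) ` (carrier G \<times> AX)" by force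
  qed
  show "(\<lambda>(g, a). lift g a) ` (carrier G \<times> AX) \<subseteq> AY"
    using lift_in by auto
qed

lemma finAY: "finite AY"
  unfolding AY_image using finG finAX by simp

lemma fiber: "a \<in> AX \<Longrightarrow> {b\<in>AY. cover_arc b = a} = (\<lambda>g. lift g a) ` carrier G"
proof
  assume a: "a \<in> AX"
  show "{b\<in>AY. cover_arc b = a} \<subseteq> (\<lambda>g. lift g a) ` carrier G"
  proof
    fix b assume b: "b \<in> {b\<in>AY. cover_arc b = a}"
    then have bA: "b \<in> AY" "cover_arc b = a" by auto
    have "snd (fst b) \<in> carrier G" "b = lift (snd (fst b)) (cover_arc b)" using AY_lift[OF bA(1)] by blast+
    then show "b \<in> (\<lambda>g. lift g a) ` carrier G" using bA(2) by blast
  qed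
  show "(\<lambda>g. lift g a) ` carrier G \<subseteq> {b\<in>AY. cover_arc b = a}"
  proof
    fix x assume "x \<in> (\<lambda>g. lift g a) ` carrier G"
    then obtain g where g: "g \<in> carrier G" "x = lift g a" by blast
    show "x \<in> {b\<in>AY. cover_arc b = a}" using lift_in[OF g(1) a] g(2) by simp
  qed
qed

lemma card_fiber: "a \<in> AX \<Longrightarrow> card {b\<in>AY. cover_arc b = a} = card (carrier G)"
  unfolding fiber by (rule card_image) (auto intro!: inj_onI dest: lift_inj)

lemma Gpos: "card (carrier G) > 0"
proof -
  have "\<one>\<^bsub>G\<^esub> \<in> carrier G" by (rule monoid.one_closed[OF group.is_monoid[OF grp]])
  then show ?thesis using finG by (auto simp: card_gt_0_iff)
qed

lemma cover_ok: "cover AX AY cover_arc (card (carrier G))"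
proof
  show "finite AX" by (rule finAX)
  show "finite AY" by (rule finAY)
  show "\<And>b. b \<in> AY \<Longrightarrow> cover_arc b \<in> AX" using AY_lift by blast
  show "\<And>a. a \<in> AX \<Longrightarrow> card {b\<in>AY. cover_arc b = a} = card (carrier G)" by (rule card_fiber)
  show "0 < card (carrier G)" by (rule Gpos)
qed

lemma oe: "orientable_embedding V E \<sigma>"
  using circ by (simp add: circular_embedding_def)

lemma sigma_bij: "bij_betw \<sigma> AX AX"
  using oe by (simp add: orientable_embedding_def)

lemma sigma_maps: "\<sigma> ` AX \<subseteq> AX"
  using bij_betw_imp_surj_on[OF sigma_bij] by simp

lemma sigma_inj: "inj_on \<sigma> AX"
  using bij_betw_imp_inj_on[OF sigma_bij] .

lemma sigma_fst: "a \<in> AX \<Longrightarrow> fst (\<sigma> a) = snd a"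
  using oe by (simp add: orientable_embedding_def)

lemma sigmaY_lift:
  assumes a: "a \<in> AX"
  shows "\<sigma>Y (lift g a) = lift (g \<otimes>\<^bsub>G\<^esub> \<phi> a) (\<sigma> a)"
proof -
  obtain u v where uv: "a = (u, v)" by (cases a)
  obtain v' w where s: "\<sigma> a = (v', w)" by (cases "\<sigma> a")
  have "v' = v" using sigma_fst[OF a] uv s by simp
  then show ?thesis using uv s by (simp add: voltage_embedding_def lift_def Let_def)
qed

lemma sigmaY_maps: "\<sigma>Y ` AY \<subseteq> AY"
proof
  fix x assume "x \<in> \<sigma>Y ` AY"
  then obtain b where b: "b \<in> AY" "x = \<sigma>Y b" by blast
  let ?g = "snd (fst b)" and ?a = "cover_arc b"
  have h: "?g \<in> carrier G" "?a \<in> AX" "b = lift ?g ?a" using AY_lift[OF b(1)] by blast+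
  have "x = lift (?g \<otimes>\<^bsub>G\<^esub> \<phi> ?a) (\<sigma> ?a)" using b(2) h sigmaY_lift by metis
  moreover have "?g \<otimes>\<^bsub>G\<^esub> \<phi> ?a \<in> carrier G" using mclosed[OF h(1) phiG[OF h(2)]] .
  moreover have "\<sigma> ?a \<in> AX" using sigma_maps h(2) by blast
  ultimately show "x \<in> AY" using lift_in by simp
qed

lemma sigmaY_inj: "inj_on \<sigma>Y AY"
proof (rule inj_onI)
  fix b b' assume b: "b \<in> AY" and b': "b' \<in> AY" and eq: "\<sigma>Y b = \<sigma>Y b'"
  let ?g = "snd (fst b)" and ?a = "cover_arc b" and ?g' = "snd (fst b')" and ?a' = "cover_arc b'"
  have h: "?g \<in> carrier G" "?a \<in> AX" "b = lift ?g ?a" using AY_lift[OF b] by blast+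
  have h': "?g' \<in> carrier G" "?a' \<in> AX" "b' = lift ?g' ?a'" using AY_lift[OF b'] by blast+
  have "lift (?g \<otimes>\<^bsub>G\<^esub> \<phi> ?a) (\<sigma> ?a) = lift (?g' \<otimes>\<^bsub>G\<^esub> \<phi> ?a') (\<sigma> ?a')"
    using eq h h' sigmaY_lift by metis
  then have e: "?g \<otimes>\<^bsub>G\<^esub> \<phi> ?a = ?g' \<otimes>\<^bsub>G\<^esub> \<phi> ?a'" "\<sigma> ?a = \<sigma> ?a'" using lift_inj by blast+
  have aa: "?a = ?a'" using inj_onD[OF sigma_inj e(2) h(2) h'(2)] .
  have "?g = ?g'" using e(1) aa group.right_cancel[OF grp phiG[OF h(2)] h(1) h'(1)] by simp
  then show "b = b'" using h(3) h'(3) aa by simp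
qed

lemma cover_sigmaY: "b \<in> AY \<Longrightarrow> cover_arc (\<sigma>Y b) = \<sigma> (cover_arc b)"
  using AY_lift sigmaY_lift by (metis cover_lift)

lemma cover_sigmaY_pow: "b \<in> AY \<Longrightarrow> cover_arc ((\<sigma>Y ^^ n) b) = (\<sigma> ^^ n) (cover_arc b)"
proof (induction n)
  case 0 then show ?case by simp
next
  case (Suc n)
  have "(\<sigma>Y ^^ n) b \<in> AY" by (rule funpow_in[OF sigmaY_maps Suc.prems])
  then show ?case using Suc by (simp add: cover_sigmaY)
qed

lemma tail_count:
  assumes b: "b \<in> AY" and a: "a \<in> AX"
  shows "card {b'\<in>{b'\<in>AY. cover_arc b' = a}. fst b' = fst b} = (if fst a = fst (cover_arc b) then 1 else 0)"
proof -
  let ?g = "snd (fst b)" and ?a0 = "cover_arc b"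
  have h: "?g \<in> carrier G" "?a0 \<in> AX" "b = lift ?g ?a0" using AY_lift[OF b] by blast+
  have fb: "fst b = (fst ?a0, ?g)" using h(3) fst_lift by metis
  have "{b'\<in>{b'\<in>AY. cover_arc b' = a}. fst b' = fst b} = {b'\<in>(\<lambda>g. lift g a) ` carrier G. fst b' = (fst ?a0, ?g)}"
    using fiber[OF a] fb by simp
  also have "\<dots> = (if fst a = fst ?a0 then {lift ?g a} else {})"
  proof -
    have iff: "x \<in> {b'\<in>(\<lambda>g. lift g a) ` carrier G. fst b' = (fst ?a0, ?g)} \<longleftrightarrow> (fst a = fst ?a0 \<and> x = lift ?g a)" for x
    proof
      assume "x \<in> {b'\<in>(\<lambda>g. lift g a) ` carrier G. fst b' = (fst ?a0, ?g)}"
      then obtain g' where g': "g' \<in> carrier G" "x = lift g' a" "fst x = (fst ?a0, ?g)" by blast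
      then have "(fst a, g') = (fst ?a0, ?g)" by (simp add: fst_lift)
      then show "fst a = fst ?a0 \<and> x = lift ?g a" using g' by simp
    next
      assume x: "fst a = fst ?a0 \<and> x = lift ?g a"
      have "lift ?g a \<in> (\<lambda>g. lift g a) ` carrier G" using h(1) by blast
      then show "x \<in> {b'\<in>(\<lambda>g. lift g a) ` carrier G. fst b' = (fst ?a0, ?g)}"
        using x by (simp add: fst_lift)
    qed
    show ?thesis
    proof (cases "fst a = fst ?a0")
      case True
      have "{b'\<in>(\<lambda>g. lift g a) ` carrier G. fst b' = (fst ?a0, ?g)} = {lift ?g a}"
        by (rule Set.set_eqI) (simp only: iff True singleton_iff simp_thms)
      then show ?thesis using True by simp
    next
      case False
      have "{b'\<in>(\<lambda>g. lift g a) ` carrier G. fst b' = (fst ?a0, ?g)} = {}"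
        by (rule Set.set_eqI) (simp only: iff False empty_iff simp_thms)
      then show ?thesis using False by simp
    qed
  qed
  finally show ?thesis by simp
qed

lemma tail_card:
  assumes b: "b \<in> AY"
  shows "card {b'\<in>AY. fst b' = fst b} = card {c\<in>AX. fst c = fst (cover_arc b)}"
proof -
  let ?g = "snd (fst b)" and ?a0 = "cover_arc b"
  have h: "?g \<in> carrier G" "?a0 \<in> AX" "b = lift ?g ?a0" using AY_lift[OF b] by blast+
  have fb: "fst b = (fst ?a0, ?g)" using h(3) fst_lift by metis
  have "{b'\<in>AY. fst b' = fst b} = (\<lambda>c. lift ?g c) ` {c\<in>AX. fst c = fst ?a0}"
  proof
    show "{b'\<in>AY. fst b' = fst b} \<subseteq> (\<lambda>c. lift ?g c) ` {c\<in>AX. fst c = fst ?a0}"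
    proof
      fix b' assume b': "b' \<in> {b'\<in>AY. fst b' = fst b}"
      then have bA: "b' \<in> AY" "fst b' = fst b" by auto
      have h': "cover_arc b' \<in> AX" "b' = lift (snd (fst b')) (cover_arc b')" using AY_lift[OF bA(1)] by blast+
      have p1: "fst b' = (fst (cover_arc b'), snd (fst b'))" using h'(2) fst_lift by metis
      have "(fst (cover_arc b'), snd (fst b')) = (fst ?a0, ?g)" using p1 bA(2) fb by metis
      then have e: "fst (cover_arc b') = fst ?a0" "snd (fst b') = ?g" by simp_all
      have "cover_arc b' \<in> {c\<in>AX. fst c = fst ?a0}" using h'(1) e(1) by simp
      moreover have "b' = lift ?g (cover_arc b')" using h'(2) e(2) by simp
      ultimately show "b' \<in> (\<lambda>c. lift ?g c) ` {c\<in>AX. fst c = fst ?a0}" by (rule rev_image_eqI)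
    qed
    show "(\<lambda>c. lift ?g c) ` {c\<in>AX. fst c = fst ?a0} \<subseteq> {b'\<in>AY. fst b' = fst b}"
      using lift_in[OF h(1)] fb by (auto simp: fst_lift)
  qed
  moreover have "inj_on (\<lambda>c. lift ?g c) {c\<in>AX. fst c = fst ?a0}"
    by (auto intro!: inj_onI dest: lift_inj)
  ultimately show ?thesis by (simp add: card_image)
qed

end


context vsetting begin

lemma periods:
  obtains N where "N > 0" "\<forall>a\<in>AX. (\<sigma> ^^ N) a = a" "\<forall>b\<in>AY. (\<sigma>Y ^^ N) b = b"
proof -
  obtain NX where NX: "NX > 0" "\<forall>a\<in>AX. (\<sigma> ^^ NX) a = a"
    using common_period[OF finAX sigma_maps sigma_inj] by blast
  obtain NY where NY: "NY > 0" "\<forall>b\<in>AY. (\<sigma>Y ^^ NY) b = b"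
    using common_period[OF finAY sigmaY_maps sigmaY_inj] by blast
  have "\<forall>a\<in>AX. (\<sigma> ^^ (NY * NX)) a = a"
    using NX(2) funpow_mult_period[where k = NY and p = NX and f = \<sigma>] by blast
  moreover have "\<forall>b\<in>AY. (\<sigma>Y ^^ (NX * NY)) b = b"
    using NY(2) funpow_mult_period[where k = NX and p = NY and f = \<sigma>Y] by blast
  moreover have "NX * NY > 0" using NX NY by simp
  ultimately show ?thesis using that[of "NX * NY"] by (simp add: mult.commute)
qed

lemma face_cond:
  assumes b: "b \<in> AY" and a: "a \<in> AX"
  shows "(\<Sum>b'\<in>{b'\<in>AY. cover_arc b' = a}. clsmat AY (facial_orbit \<sigma>Y) b b')
         = clsmat AX (facial_orbit \<sigma>) (cover_arc b) a"
proof -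
  obtain N where Npos: "N > 0" and perX: "\<forall>a\<in>AX. (\<sigma> ^^ N) a = a" and perY: "\<forall>b\<in>AY. (\<sigma>Y ^^ N) b = b"
    using periods by blast
  have cb: "cover_arc b \<in> AX" using AY_lift[OF b] by blast
  let ?F = "{b'\<in>AY. cover_arc b' = a}"
  have 1: "(\<Sum>b'\<in>?F. clsmat AY (facial_orbit \<sigma>Y) b b')
      = (\<Sum>b'\<in>?F. of_nat (card {n\<in>{..<N}. (\<sigma>Y ^^ n) b = b'}) / of_nat N)"
  proof (intro sum.cong refl)
    fix b' assume "b' \<in> ?F"
    then have "b' \<in> AY" by simp
    then show "clsmat AY (facial_orbit \<sigma>Y) b b' = of_nat (card {n\<in>{..<N}. (\<sigma>Y ^^ n) b = b'}) / of_nat N"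
      by (rule clsmat_avg[OF finAY sigmaY_maps sigmaY_inj Npos perY b])
  qed
  have 2: "(\<Sum>b'\<in>?F. of_nat (card {n\<in>{..<N}. (\<sigma>Y ^^ n) b = b'}) / (of_nat N :: complex))
      = of_nat (\<Sum>b'\<in>?F. card {n\<in>{..<N}. (\<sigma>Y ^^ n) b = b'}) / of_nat N"
    by (simp add: sum_divide_distrib)
  have 3: "(\<Sum>b'\<in>?F. card {n\<in>{..<N}. (\<sigma>Y ^^ n) b = b'}) = card {n\<in>{..<N}. cover_arc ((\<sigma>Y ^^ n) b) = a}"
    by (rule sum_card_fiber[of "{..<N}" AY "\<lambda>n. (\<sigma>Y ^^ n) b" cover_arc a])
       (auto intro: funpow_in[OF sigmaY_maps b] simp: finAY)
  have 4: "{n\<in>{..<N}. cover_arc ((\<sigma>Y ^^ n) b) = a} = {n\<in>{..<N}. (\<sigma> ^^ n) (cover_arc b) = a}"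
    using cover_sigmaY_pow[OF b] by simp
  have 5: "of_nat (card {n\<in>{..<N}. (\<sigma> ^^ n) (cover_arc b) = a}) / of_nat N
      = clsmat AX (facial_orbit \<sigma>) (cover_arc b) a"
    by (rule clsmat_avg[OF finAX sigma_maps sigma_inj Npos perX cb a, symmetric])
  show ?thesis unfolding 1 2 3 4 5 ..
qed

lemma tail_cond:
  assumes b: "b \<in> AY" and a: "a \<in> AX"
  shows "(\<Sum>b'\<in>{b'\<in>AY. cover_arc b' = a}. clsmat AY (\<lambda>x. {c\<in>AY. fst c = fst x}) b b')
         = clsmat AX (\<lambda>x. {c\<in>AX. fst c = fst x}) (cover_arc b) a"
proof -
  let ?F = "{b'\<in>AY. cover_arc b' = a}"
  let ?dY = "card {c\<in>AY. fst c = fst b}"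
  have cb: "cover_arc b \<in> AX" using AY_lift[OF b] by blast
  have ffin: "finite ?F" using finAY by simp
  have "(\<Sum>b'\<in>?F. clsmat AY (\<lambda>x. {c\<in>AY. fst c = fst x}) b b')
      = (\<Sum>b'\<in>?F. if fst b' = fst b then 1 / of_nat ?dY else 0)"
    using b by (intro sum.cong refl) (auto simp: clsmat_def)
  also have "\<dots> = (\<Sum>b'\<in>{b'\<in>?F. fst b' = fst b}. 1 / of_nat ?dY)"
    by (simp only: sum.inter_filter[OF ffin])
  also have "\<dots> = of_nat (card {b'\<in>?F. fst b' = fst b}) * (1 / of_nat ?dY)"
    by (simp only: sum_constant)
  also have "\<dots> = of_nat (if fst a = fst (cover_arc b) then 1 else 0) * (1 / of_nat (card {c\<in>AX. fst c = fst (cover_arc b)}))"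
    by (simp only: tail_count[OF b a] tail_card[OF b])
  also have "\<dots> = (if fst a = fst (cover_arc b) then 1 / of_nat (card {c\<in>AX. fst c = fst (cover_arc b)}) else 0)"
    by simp
  also have "\<dots> = clsmat AX (\<lambda>x. {c\<in>AX. fst c = fst x}) (cover_arc b) a"
    using cb a by (auto simp: clsmat_def)
  finally show ?thesis .
qed

lemma main:
  "let VY = voltage_vertices G V; EY = voltage_edges G E \<phi>;
       \<sigma>Y = voltage_embedding G \<phi> \<sigma>;
       AX = arcs V E; AY = arcs VY EY;
       L = norm_char_matrix AY AX (\<lambda>a. {b \<in> AY. cover_arc b = a})
   in transition_matrix V E \<sigma> =
        mmult AX AY AX (mtrans L) (mmult AY AY AX (transition_matrix VY EY \<sigma>Y) L)
    \<and> H_digraph V E \<sigma> = quotient_digraph AY AX (H_digraph VY EY \<sigma>Y) L"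
proof -
  interpret cv: cover AX AY cover_arc "card (carrier G)" by (rule cover_ok)
  have Ldef: "norm_char_matrix AY AX (\<lambda>a. {b \<in> AY. cover_arc b = a}) = cv.L" by (simp add: cv.L_def)
  define KXo where "KXo = refl_of AX (clsmat AX (facial_orbit \<sigma>))"
  define KXt where "KXt = refl_of AX (clsmat AX (\<lambda>x. {c\<in>AX. fst c = fst x}))"
  define KYo where "KYo = refl_of AY (clsmat AY (facial_orbit \<sigma>Y))"
  define KYt where "KYt = refl_of AY (clsmat AY (\<lambda>x. {c\<in>AY. fst c = fst x}))"
  define UX where "UX = mmult AX AX AX KXo KXt"
  define UY where "UY = mmult AY AY AY KYo KYt"
  define WX where "WX = mmult AX AX AX UX UX"
  define WY where "WY = mmult AY AY AY UY UY"
  define WXa where "WXa = mmult AX AX AX (mmult AX AX AX KXt KXo) (mmult AX AX AX KXt KXo)"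
  define WYa where "WYa = mmult AY AY AY (mmult AY AY AY KYt KYo) (mmult AY AY AY KYt KYo)"
  have TX: "transition_matrix V E \<sigma> = UX"
    by (simp only: transition_matrix_def Let_def Pmat[OF finAX sigma_maps sigma_inj] Qmat[OF finV]
        UX_def KXo_def KXt_def refl_of_def)
  have TY: "transition_matrix VY EY \<sigma>Y = UY"
    by (simp only: transition_matrix_def Let_def Pmat[OF finAY sigmaY_maps sigmaY_inj] Qmat[OF finVY]
        UY_def KYo_def KYt_def refl_of_def)
  have okXo: "cls_ok AX (facial_orbit \<sigma>)" by (rule cls_ok_orbit[OF finAX sigma_maps sigma_inj])
  have okXt: "cls_ok AX (\<lambda>x. {c\<in>AX. fst c = fst x})" by (rule cls_ok_tail[OF finAX])
  have okYo: "cls_ok AY (facial_orbit \<sigma>Y)" by (rule cls_ok_orbit[OF finAY sigmaY_maps sigmaY_inj])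
  have okYt: "cls_ok AY (\<lambda>x. {c\<in>AY. fst c = fst x})" by (rule cls_ok_tail[OF finAY])
  have uX: "unit_op AX WX WXa"
    unfolding WX_def WXa_def UX_def KXo_def KXt_def
    by (rule unit_from_refl[OF finAX refl_cls(1)[OF okXo] refl_cls(2)[OF okXo] refl_cls(1)[OF okXt] refl_cls(2)[OF okXt]])
  have uY: "unit_op AY WY WYa"
    unfolding WY_def WYa_def UY_def KYo_def KYt_def
    by (rule unit_from_refl[OF finAY refl_cls(1)[OF okYo] refl_cls(2)[OF okYo] refl_cls(1)[OF okYt] refl_cls(2)[OF okYt]])
  have iO: "mmult AY AY AX (clsmat AY (facial_orbit \<sigma>Y)) cv.L = mmult AY AX AX cv.L (clsmat AX (facial_orbit \<sigma>))"
    by (rule cv.inter) (rule face_cond)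
  have iT: "mmult AY AY AX (clsmat AY (\<lambda>x. {c\<in>AY. fst c = fst x})) cv.L
      = mmult AY AX AX cv.L (clsmat AX (\<lambda>x. {c\<in>AX. fst c = fst x}))"
    by (rule cv.inter) (rule tail_cond)
  have UYL: "mmult AY AY AX UY cv.L = mmult AY AX AX cv.L UX"
    unfolding UY_def UX_def KYo_def KYt_def KXo_def KXt_def
    by (rule cv.inter_mult[OF cv.inter_refl[OF iO] cv.inter_refl[OF iT]])
  have WYL: "mmult AY AY AX WY cv.L = mmult AY AX AX cv.L WX"
    unfolding WY_def WX_def by (rule cv.inter_mult[OF UYL UYL])
  have part1: "transition_matrix V E \<sigma> = mmult AX AY AX (mtrans cv.L) (mmult AY AY AX (transition_matrix VY EY \<sigma>Y) cv.L)"
  proof -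
    have "mmult AX AY AX (mtrans cv.L) (mmult AY AY AX (transition_matrix VY EY \<sigma>Y) cv.L)
        = mmult AX AY AX (mtrans cv.L) (mmult AY AX AX cv.L UX)" by (simp only: TY UYL)
    also have "\<dots> = UX" by (rule cv.cancel) (simp add: UX_def mmult_out)
    finally show ?thesis using TX by simp
  qed
  obtain Z where Z: "finite Z" "\<forall>v. supp AY v \<longrightarrow> pact AY WY (qZ Z) v = (\<lambda>i. 0)"
    using unit_op.exists_Z[OF uY] unfolding qZ_def by blast
  have spY: "spec_op AY WY WYa Z"
    unfolding spec_op_def spec_op_axioms_def using uY Z by blast
  have annX: "\<forall>v. supp AX v \<longrightarrow> pact AX WX (qZ Z) v = (\<lambda>i. 0)"
  proof (intro allI impI)
    fix v assume v: "supp AX v"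
    let ?w = "pact AX WX (qZ Z) v"
    have ws: "supp AX ?w" by (rule pact_supp[OF v])
    have "?w = ap AX AY (mtrans cv.L) (ap AY AX cv.L ?w)" by (rule cv.LtL_ap[OF ws, symmetric])
    also have "ap AY AX cv.L ?w = pact AY WY (qZ Z) (ap AY AX cv.L v)"
      by (rule cv.inter_pact[OF WYL, symmetric])
    also have "\<dots> = (\<lambda>i. 0)" using Z(2) supp_ap by blast
    finally show "?w = (\<lambda>i. 0)" by simp
  qed
  have spX: "spec_op AX WX WXa Z"
    unfolding spec_op_def spec_op_axioms_def using uX Z(1) annX by blast
  define HY where "HY = (\<lambda>i j. if i \<in> AY \<and> j \<in> AY then (\<Sum>a\<in>Z. (- \<i> * Ln a) * pact AY WY (lag Z a) (ev j) i) else 0)"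
  define HX where "HX = (\<lambda>i j. if i \<in> AX \<and> j \<in> AX then (\<Sum>a\<in>Z. (- \<i> * Ln a) * pact AX WX (lag Z a) (ev j) i) else 0)"
  have HYd: "H_digraph VY EY \<sigma>Y = HY"
    unfolding H_digraph_def Let_def TY WY_def[symmetric] HY_def by (rule ph_explicit[OF spY])
  have HXd: "H_digraph V E \<sigma> = HX"
    unfolding H_digraph_def Let_def TX WX_def[symmetric] HX_def by (rule ph_explicit[OF spX])
  have HYL: "mmult AY AY AX HY cv.L = mmult AY AX AX cv.L HX"
  proof (intro ext)
    fix b a
    show "mmult AY AY AX HY cv.L b a = mmult AY AX AX cv.L HX b a"
    proof (cases "b \<in> AY \<and> a \<in> AX")
      case True
      let ?c = "\<lambda>a. - \<i> * Ln a"
      have "(\<Sum>b'\<in>AY. HY b b' * cv.L b' a) = (\<Sum>b'\<in>AY. \<Sum>\<alpha>\<in>Z. ?c \<alpha> * (cv.L b' a * pact AY WY (lag Z \<alpha>) (ev b') b))"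
        using True by (intro sum.cong refl) (simp add: HY_def sum_distrib_right sum_distrib_left mult_ac)
      also have "\<dots> = (\<Sum>\<alpha>\<in>Z. ?c \<alpha> * (\<Sum>b'\<in>AY. cv.L b' a * pact AY WY (lag Z \<alpha>) (ev b') b))"
        by (simp add: sum.swap[of _ Z] sum_distrib_left)
      also have "\<dots> = (\<Sum>\<alpha>\<in>Z. ?c \<alpha> * ap AY AX cv.L (pact AX WX (lag Z \<alpha>) (ev a)) b)"
      proof (intro sum.cong refl)
        fix \<alpha>
        have "(\<Sum>b'\<in>AY. cv.L b' a * pact AY WY (lag Z \<alpha>) (ev b') b)
            = pact AY WY (lag Z \<alpha>) (\<lambda>x. \<Sum>b'\<in>AY. cv.L b' a * ev b' x) b"
          by (simp only: pact_lc)
        also have "\<dots> = pact AY WY (lag Z \<alpha>) (ap AY AX cv.L (ev a)) b"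
          using True by (simp only: cv.Lcol)
        also have "\<dots> = ap AY AX cv.L (pact AX WX (lag Z \<alpha>) (ev a)) b"
          by (simp only: cv.inter_pact[OF WYL])
        finally show "?c \<alpha> * (\<Sum>b'\<in>AY. cv.L b' a * pact AY WY (lag Z \<alpha>) (ev b') b)
            = ?c \<alpha> * ap AY AX cv.L (pact AX WX (lag Z \<alpha>) (ev a)) b" by simp
      qed
      also have "\<dots> = (\<Sum>\<alpha>\<in>Z. ?c \<alpha> * (\<Sum>a'\<in>AX. cv.L b a' * pact AX WX (lag Z \<alpha>) (ev a) a'))"
        using True by (simp add: ap_def)
      also have "\<dots> = (\<Sum>a'\<in>AX. cv.L b a' * HX a' a)"
      proof -
        have "(\<Sum>a'\<in>AX. cv.L b a' * HX a' a) = (\<Sum>a'\<in>AX. \<Sum>\<alpha>\<in>Z. ?c \<alpha> * (cv.L b a' * pact AX WX (lag Z \<alpha>) (ev a) a'))"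
          using True by (intro sum.cong refl) (simp add: HX_def sum_distrib_right sum_distrib_left mult_ac)
        also have "\<dots> = (\<Sum>\<alpha>\<in>Z. ?c \<alpha> * (\<Sum>a'\<in>AX. cv.L b a' * pact AX WX (lag Z \<alpha>) (ev a) a'))"
          by (simp add: sum.swap[of _ Z] sum_distrib_left)
        finally show ?thesis by simp
      qed
      finally show ?thesis using True by (simp add: mmult_def)
    qed (auto simp: mmult_def)
  qed
  have part2: "H_digraph V E \<sigma> = quotient_digraph AY AX (H_digraph VY EY \<sigma>Y) cv.L"
  proof -
    have "quotient_digraph AY AX (H_digraph VY EY \<sigma>Y) cv.L = mmult AX AY AX (mtrans cv.L) (mmult AY AX AX cv.L HX)"
      by (simp only: quotient_digraph_def HYd HYL)
    also have "\<dots> = HX" by (rule cv.cancel) (auto simp: HX_def)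
    finally show ?thesis using HXd by simp
  qed
  show ?thesis unfolding Let_def Ldef using part1 part2 by blast
qed

end


theorem theorem6p2:
  fixes V :: "'v set" and E :: "'v \<Rightarrow> 'v \<Rightarrow> bool"
    and \<sigma> :: "'v \<times> 'v \<Rightarrow> 'v \<times> 'v"
    and G :: "'g monoid" and \<phi> :: "'v \<times> 'v \<Rightarrow> 'g"
  assumes "simple_graph V E"
    and "connected_graph V E"
    and "circular_embedding V E \<sigma>"
    and "group G" and "finite (carrier G)"
    and "voltage_assignment G V E \<phi>"
    and "connected_graph (voltage_vertices G V) (voltage_edges G E \<phi>)"
  shows "let VY = voltage_vertices G V; EY = voltage_edges G E \<phi>;
             \<sigma>Y = voltage_embedding G \<phi> \<sigma>;
             AX = arcs V E; AY = arcs VY EY;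
             L = norm_char_matrix AY AX (\<lambda>a. {b \<in> AY. cover_arc b = a})
         in transition_matrix V E \<sigma> =
              mmult AX AY AX (mtrans L) (mmult AY AY AX (transition_matrix VY EY \<sigma>Y) L)
          \<and> H_digraph V E \<sigma> = quotient_digraph AY AX (H_digraph VY EY \<sigma>Y) L"
proof -
  have "vsetting V E \<sigma> G \<phi>"
    unfolding vsetting_def using assms(1,3,4,5,6) by blast
  then show ?thesis by (rule vsetting.main)
qed

end
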